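(* Let $F$ be a cellular automaton on $A^{\mathbb Z}$ and $\mu$ a $\sigma$-ergodic, $F$-invariant Borel probability measure such that $F$ is $\mu$-equicontinuous. Then $h_\mu(F)=0$.
   Context: $A$ is a finite alphabet, $\sigma(x)_i=x_{i+1}$, and $d(x,y)=2^{-\min\{|j|:x_j\ne y_j\}}$. $F$ is a cellular automaton of radius $r$, i.e. $F(x)_i=f(x_{i-r},\dots,x_{i+r})$. $B_n(x)=\{y:d(F^ix,F^iy)<2^{-n}\ \forall i\ge0\}$. $F$ is $\mu$-equicontinuous if there is a point $x$ with $\mu(B_r(x))>0$. $h_\mu(F)$ is the measure-theoretic entropy of $F$. *)

theory Defs
  imports "HOL-Probability.Probability"
begin

definition shift :: "(int \<Rightarrow> 'a) \<Rightarrow> (int \<Rightarrow> 'a)" where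
  "shift x = (\<lambda>i. x (i + 1))"

definition cellular_automaton :: "((int \<Rightarrow> 'a) \<Rightarrow> (int \<Rightarrow> 'a)) \<Rightarrow> nat \<Rightarrow> bool" where
  "cellular_automaton F r \<longleftrightarrow>
     (\<exists>f :: 'a list \<Rightarrow> 'a. \<forall>x i. F x i = f (map x [i - int r .. i + int r]))"

definition cantor_dist :: "(int \<Rightarrow> 'a) \<Rightarrow> (int \<Rightarrow> 'a) \<Rightarrow> real" where
  "cantor_dist x y =
     (if x = y then 0 else 2 powr (- real (LEAST k::nat. \<exists>j. nat \<bar>j\<bar> = k \<and> x j \<noteq> y j)))"

definition Bball :: "((int \<Rightarrow> 'a) \<Rightarrow> (int \<Rightarrow> 'a)) \<Rightarrow> nat \<Rightarrow> (int \<Rightarrow> 'a) \<Rightarrow> (int \<Rightarrow> 'a) set" where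
  "Bball F n x = {y. \<forall>i::nat. cantor_dist ((F ^^ i) x) ((F ^^ i) y) < 2 powr (- real n)}"

(* Borel sigma-algebra of A^Z = product sigma-algebra of discrete factors *)
definition full_shift_space :: "(int \<Rightarrow> 'a) measure" where
  "full_shift_space = PiM UNIV (\<lambda>_. count_space UNIV)"

(* F is mu-equicontinuous (r = radius of F) *)
definition mu_equicontinuous :: "(int \<Rightarrow> 'a) measure \<Rightarrow> ((int \<Rightarrow> 'a) \<Rightarrow> (int \<Rightarrow> 'a)) \<Rightarrow> nat \<Rightarrow> bool" where
  "mu_equicontinuous \<mu> F r \<longleftrightarrow> (\<exists>x. emeasure \<mu> (Bball F r x) > 0)"

definition invariant_measure :: "'b measure \<Rightarrow> ('b \<Rightarrow> 'b) \<Rightarrow> bool" where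
  "invariant_measure \<mu> T \<longleftrightarrow> T \<in> measurable \<mu> \<mu> \<and> distr \<mu> \<mu> T = \<mu>"

definition ergodic :: "'b measure \<Rightarrow> ('b \<Rightarrow> 'b) \<Rightarrow> bool" where
  "ergodic \<mu> T \<longleftrightarrow> invariant_measure \<mu> T \<and>
     (\<forall>A \<in> sets \<mu>. T -` A \<inter> space \<mu> = A \<longrightarrow> measure \<mu> A = 0 \<or> measure \<mu> A = 1)"

definition finite_meas_partition :: "'b measure \<Rightarrow> 'b set set \<Rightarrow> bool" where
  "finite_meas_partition \<mu> P \<longleftrightarrow> finite P \<and> P \<subseteq> sets \<mu> \<and> \<Union>P = space \<mu> \<and>
     (\<forall>A\<in>P. \<forall>B\<in>P. A \<noteq> B \<longrightarrow> A \<inter> B = {})"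

definition partition_entropy :: "'b measure \<Rightarrow> 'b set set \<Rightarrow> real" where
  "partition_entropy \<mu> P = - (\<Sum>A\<in>P. measure \<mu> A * ln (measure \<mu> A))"

definition iter_join :: "'b measure \<Rightarrow> ('b \<Rightarrow> 'b) \<Rightarrow> 'b set set \<Rightarrow> nat \<Rightarrow> 'b set set" where
  "iter_join \<mu> T P n =
     {space \<mu> \<inter> (\<Inter>i<n. (T ^^ i) -` c i) | c. \<forall>i<n. c i \<in> P}"

definition partition_entropy_rate :: "'b measure \<Rightarrow> ('b \<Rightarrow> 'b) \<Rightarrow> 'b set set \<Rightarrow> real" where
  "partition_entropy_rate \<mu> T P =
     lim (\<lambda>n. partition_entropy \<mu> (iter_join \<mu> T P (Suc n)) / real (Suc n))"

definition ks_entropy :: "'b measure \<Rightarrow> ('b \<Rightarrow> 'b) \<Rightarrow> ereal" where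
  "ks_entropy \<mu> T = (SUP P \<in> {P. finite_meas_partition \<mu> P}. ereal (partition_entropy_rate \<mu> T P))"

end

theory Submission
  imports Defs
begin


definition fv :: "'x measure \<Rightarrow> ('x \<Rightarrow> 'b) \<Rightarrow> bool" where
  "fv M X \<longleftrightarrow> finite (range X) \<and> (\<forall>v. X -` {v} \<in> sets M)"

definition pr :: "'x measure \<Rightarrow> ('x \<Rightarrow> 'b) \<Rightarrow> 'b \<Rightarrow> real" where
  "pr M X v = measure M (X -` {v})"

definition Hs :: "'x measure \<Rightarrow> ('x \<Rightarrow> 'b) \<Rightarrow> real" where
  "Hs M X = - (\<Sum>v\<in>range X. pr M X v * ln (pr M X v))"

locale ent = prob_space + assumes sp: "space M = UNIV"
begin

lemma fv_pair: "fv M X \<Longrightarrow> fv M Y \<Longrightarrow> fv M (\<lambda>z. (X z, Y z))"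
proof -
  assume a: "fv M X" "fv M Y"
  have "range (\<lambda>z. (X z, Y z)) \<subseteq> range X \<times> range Y" by auto
  hence "finite (range (\<lambda>z. (X z, Y z)))" using a unfolding fv_def by (meson finite_SigmaI finite_subset)
  moreover have "(\<lambda>z. (X z, Y z)) -` {(x,y)} = X -` {x} \<inter> Y -` {y}" for x y by auto
  ultimately show ?thesis using a unfolding fv_def by auto
qed

lemma fv_comp: assumes "fv M X" shows "fv M (\<lambda>z. f (X z))"
proof -
  have r: "range (\<lambda>z. f (X z)) = f ` range X" by auto
  have "(\<lambda>z. f (X z)) -` {u} = (\<Union>v\<in>{v\<in>range X. f v = u}. X -` {v})" for u by auto
  moreover have "(\<Union>v\<in>{v\<in>range X. f v = u}. X -` {v}) \<in> sets M" for u
    using assms unfolding fv_def by (intro sets.finite_UN) auto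
  ultimately show ?thesis using assms r unfolding fv_def by auto
qed

lemma fv_const: "fv M (\<lambda>z. c)"
  unfolding fv_def using sp by (auto simp: vimage_def) (metis sets.top sp)

lemma fv_pre: assumes "fv M X" "T \<in> measurable M M" shows "fv M (\<lambda>z. X (T z))"
proof -
  have "range (\<lambda>z. X (T z)) \<subseteq> range X" by auto
  moreover have "(\<lambda>z. X (T z)) -` {v} = T -` (X -` {v}) \<inter> space M" for v using sp by auto
  ultimately show ?thesis using assms unfolding fv_def
    by (auto intro: finite_subset measurable_sets)
qed

lemma fv_set: assumes "S \<in> sets M" shows "fv M (\<lambda>z. z \<in> S)"
proof -
  have "(\<lambda>z. z \<in> S) -` {v} = (if v then S else space M - S)" for v using sp by auto
  then show ?thesis using assms unfolding fv_def by auto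
qed

lemma fv_list: "(\<And>i. i \<in> set xs \<Longrightarrow> fv M (X i)) \<Longrightarrow> fv M (\<lambda>z. map (\<lambda>i. X i z) xs)"
proof (induction xs)
  case Nil then show ?case by (simp add: fv_const)
next
  case (Cons a xs)
  have "fv M (\<lambda>z. (X a z, map (\<lambda>i. X i z) xs))" using Cons by (intro fv_pair) auto
  from fv_comp[OF this, of "\<lambda>(x,l). x # l"] show ?case by simp
qed

lemma pr_nonneg: "0 \<le> pr M X v" unfolding pr_def by simp
lemma pr_le1: "pr M X v \<le> 1" unfolding pr_def by simp

lemma fiber_sum:
  assumes "fv M X"
  shows "(\<Sum>v\<in>range X. pr M X v * g (f v)) = (\<Sum>u\<in>range (\<lambda>z. f (X z)). pr M (\<lambda>z. f (X z)) u * g u)"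
proof -
  have fin: "finite (range X)" using assms unfolding fv_def by auto
  have r: "range (\<lambda>z. f (X z)) = f ` range X" by auto
  have "(\<Sum>v\<in>range X. pr M X v * g (f v)) = (\<Sum>u\<in>f ` range X. \<Sum>v\<in>{v\<in>range X. f v = u}. pr M X v * g (f v))"
    by (rule sum.image_gen[OF fin])
  also have "\<dots> = (\<Sum>u\<in>f ` range X. (\<Sum>v\<in>{v\<in>range X. f v = u}. pr M X v) * g u)"
    by (intro sum.cong refl) (auto simp: sum_distrib_right)
  also have "\<dots> = (\<Sum>u\<in>f ` range X. pr M (\<lambda>z. f (X z)) u * g u)"
  proof (intro sum.cong refl arg_cong2[where f="(*)"])
    fix u
    have "(\<lambda>z. f (X z)) -` {u} = (\<Union>v\<in>{v\<in>range X. f v = u}. X -` {v})" by auto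
    moreover have "measure M (\<Union>v\<in>{v\<in>range X. f v = u}. X -` {v}) = (\<Sum>v\<in>{v\<in>range X. f v = u}. measure M (X -` {v}))"
      using assms fin unfolding fv_def
      by (intro finite_measure_finite_Union) (auto simp: disjoint_family_on_def)
    ultimately show "(\<Sum>v\<in>{v\<in>range X. f v = u}. pr M X v) = pr M (\<lambda>z. f (X z)) u"
      unfolding pr_def by simp
  qed
  finally show ?thesis using r by simp
qed

lemma pr_sum1: assumes "fv M X" shows "(\<Sum>v\<in>range X. pr M X v) = 1"
proof -
  have e: "(\<Sum>v\<in>range X. pr M X v * (\<lambda>_. 1::real) ((\<lambda>_. ()) v)) = (\<Sum>u\<in>range (\<lambda>z. (\<lambda>_. ()) (X z)). pr M (\<lambda>z. (\<lambda>_. ()) (X z)) u * (\<lambda>_. 1) u)"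
    by (rule fiber_sum[OF assms])
  have r: "range (\<lambda>z. (\<lambda>_. ()) (X z)) = {()}" by auto
  have p: "pr M (\<lambda>z. (\<lambda>_. ()) (X z)) () = 1" unfolding pr_def using sp prob_space by simp
  have "(\<Sum>u\<in>range (\<lambda>z. (\<lambda>_. ()) (X z)). pr M (\<lambda>z. (\<lambda>_. ()) (X z)) u * (\<lambda>_. 1) u) = 1"
    unfolding r using p by simp
  with e show ?thesis by (metis (no_types, lifting) mult.right_neutral sum.cong)
qed

lemma Hs_nonneg: "0 \<le> Hs M X"
proof -
  have "pr M X v * ln (pr M X v) \<le> 0" for v
    using pr_nonneg[of X v] pr_le1[of X v]
    by (cases "pr M X v = 0") (auto simp: mult_nonneg_nonpos)
  then show ?thesis unfolding Hs_def by (simp add: sum_nonpos)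
qed

end


lemma gibbs_term:
  fixes p q :: real
  assumes "0 \<le> p" "0 \<le> q" "p > 0 \<Longrightarrow> q > 0"
  shows "p * ln q \<le> p * ln p + q - p"
proof (cases "p = 0")
  case True then show ?thesis using assms by simp
next
  case False
  then have pp: "p > 0" using assms by simp
  then have qq: "q > 0" using assms by simp
  have "ln (q / p) \<le> q / p - 1" using pp qq by (intro ln_le_minus_one) simp
  then have "p * ln (q / p) \<le> p * (q / p - 1)" using pp by (simp add: mult_left_mono)
  then show ?thesis using pp qq by (simp add: ln_div right_diff_distrib)
qed

lemma negxlnx: fixes t :: real assumes "0 \<le> t" "t \<le> 1" shows "- (t * ln t) \<le> 2 * sqrt t"
proof (cases "t = 0")
  case True then show ?thesis by simp
next
  case False
  then have tp: "t > 0" using assms by simp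
  have s: "sqrt t > 0" using tp by simp
  have "ln (1 / sqrt t) \<le> 1 / sqrt t - 1" using s by (intro ln_le_minus_one) simp
  moreover have "ln (1 / sqrt t) = - ln t / 2" using tp by (simp add: ln_div ln_sqrt)
  ultimately have "- ln t \<le> 2 / sqrt t" by (simp add: field_simps)
  then have "t * (- ln t) \<le> t * (2 / sqrt t)" using tp by (intro mult_left_mono) auto
  also have "t * (2 / sqrt t) = 2 * sqrt t" using tp
    by (metis (no_types, lifting) s less_eq_real_def mult.commute real_div_sqrt times_divide_eq_left)
  finally show ?thesis by simp
qed

lemma negxlnx2: fixes t :: real assumes "0 \<le> t" "t \<le> 1" shows "- ((1 - t) * ln (1 - t)) \<le> t"
proof (cases "t = 1")
  case True then show ?thesis by simp
next
  case False
  then have tp: "1 - t > 0" using assms by simp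
  have "ln (1 / (1 - t)) \<le> 1 / (1 - t) - 1" using tp by (intro ln_le_minus_one) simp
  moreover have "ln (1 / (1 - t)) = - ln (1 - t)" using tp by (simp add: ln_div)
  ultimately have "- ln (1 - t) \<le> 1 / (1 - t) - 1" by simp
  then have "(1 - t) * (- ln (1 - t)) \<le> (1 - t) * (1 / (1 - t) - 1)" using tp by (intro mult_left_mono) auto
  also have "\<dots> = t" using tp by (simp add: field_simps)
  finally show ?thesis by simp
qed

lemma range_unit[simp]: "range (g :: 'x \<Rightarrow> unit) = {()}" by auto

context ent begin

lemma pr_mono: "X -` {x} \<subseteq> Y -` {y} \<Longrightarrow> fv M Y \<Longrightarrow> pr M X x \<le> pr M Y y"
  unfolding pr_def fv_def by (intro finite_measure_mono) auto

lemma Hs_dp: assumes "fv M X" shows "Hs M (\<lambda>z. f (X z)) \<le> Hs M X"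
proof -
  have fY: "fv M (\<lambda>z. f (X z))" by (rule fv_comp[OF assms])
  have "(\<Sum>v\<in>range X. pr M X v * ln (pr M X v)) \<le> (\<Sum>v\<in>range X. pr M X v * ln (pr M (\<lambda>z. f (X z)) (f v)))"
  proof (intro sum_mono)
    fix v
    have le: "pr M X v \<le> pr M (\<lambda>z. f (X z)) (f v)" by (rule pr_mono[OF _ fY]) auto
    show "pr M X v * ln (pr M X v) \<le> pr M X v * ln (pr M (\<lambda>z. f (X z)) (f v))"
    proof (cases "pr M X v = 0")
      case True then show ?thesis by simp
    next
      case False
      then have p0: "pr M X v > 0" using pr_nonneg[of X v] by simp
      then have "ln (pr M X v) \<le> ln (pr M (\<lambda>z. f (X z)) (f v))" using le by (subst ln_le_cancel_iff) auto
      then show ?thesis using p0 by (intro mult_left_mono) auto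
    qed
  qed
  also have "(\<Sum>v\<in>range X. pr M X v * ln (pr M (\<lambda>z. f (X z)) (f v))) =
      (\<Sum>u\<in>range (\<lambda>z. f (X z)). pr M (\<lambda>z. f (X z)) u * ln (pr M (\<lambda>z. f (X z)) u))"
    by (rule fiber_sum[OF assms])
  finally show ?thesis unfolding Hs_def by simp
qed

lemma Hs_pair: assumes X: "fv M X" and Y: "fv M Y" shows "Hs M (\<lambda>z. (X z, Y z)) \<le> Hs M X + Hs M Y"
proof -
  define Z where "Z = (\<lambda>z. (X z, Y z))"
  have fZ: "fv M Z" unfolding Z_def by (rule fv_pair[OF X Y])
  have finX: "finite (range X)" and finY: "finite (range Y)" using X Y unfolding fv_def by auto
  define q where "q = (\<lambda>(x,y). pr M X x * pr M Y y)"
  have t: "pr M Z w * ln (q w) \<le> pr M Z w * ln (pr M Z w) + q w - pr M Z w" for w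
  proof (rule gibbs_term)
    show "0 \<le> pr M Z w" by (rule pr_nonneg)
    show "0 \<le> q w" unfolding q_def by (auto simp: pr_nonneg split: prod.splits)
    assume "pr M Z w > 0"
    moreover have "pr M Z w \<le> pr M X (fst w)" "pr M Z w \<le> pr M Y (snd w)"
      by (auto intro!: pr_mono X Y simp: Z_def)
    ultimately show "q w > 0" unfolding q_def by (auto split: prod.splits)
  qed
  have "(\<Sum>w\<in>range Z. pr M Z w * ln (q w)) \<le> (\<Sum>w\<in>range Z. pr M Z w * ln (pr M Z w) + q w - pr M Z w)"
    by (intro sum_mono t)
  also have "\<dots> = (\<Sum>w\<in>range Z. pr M Z w * ln (pr M Z w)) + (\<Sum>w\<in>range Z. q w) - 1"
    using pr_sum1[OF fZ] by (simp add: sum.distrib sum_subtractf)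
  also have "(\<Sum>w\<in>range Z. q w) \<le> (\<Sum>w\<in>range X \<times> range Y. q w)"
    using finX finY by (intro sum_mono2) (auto simp: Z_def q_def pr_nonneg)
  also have "(\<Sum>w\<in>range X \<times> range Y. q w) = (\<Sum>x\<in>range X. pr M X x) * (\<Sum>y\<in>range Y. pr M Y y)"
    unfolding q_def by (simp add: sum_product sum.cartesian_product)
  also have "\<dots> = 1" using pr_sum1[OF X] pr_sum1[OF Y] by simp
  finally have A: "(\<Sum>w\<in>range Z. pr M Z w * ln (q w)) \<le> (\<Sum>w\<in>range Z. pr M Z w * ln (pr M Z w))" by simp
  have "(\<Sum>w\<in>range Z. pr M Z w * ln (q w)) =
        (\<Sum>w\<in>range Z. pr M Z w * ln (pr M X (fst w))) + (\<Sum>w\<in>range Z. pr M Z w * ln (pr M Y (snd w)))"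
  proof -
    have "pr M Z w * ln (q w) = pr M Z w * ln (pr M X (fst w)) + pr M Z w * ln (pr M Y (snd w))" for w
    proof (cases "pr M Z w = 0")
      case True then show ?thesis by simp
    next
      case False
      then have "pr M Z w > 0" using pr_nonneg[of Z w] by simp
      moreover have "pr M Z w \<le> pr M X (fst w)" "pr M Z w \<le> pr M Y (snd w)"
        by (auto intro!: pr_mono X Y simp: Z_def)
      ultimately show ?thesis unfolding q_def by (auto simp: ln_mult distrib_left split: prod.splits)
    qed
    then show ?thesis by (simp add: sum.distrib)
  qed
  also have "(\<Sum>w\<in>range Z. pr M Z w * ln (pr M X (fst w))) = (\<Sum>x\<in>range X. pr M X x * ln (pr M X x))"
    using fiber_sum[OF fZ, of "\<lambda>x. ln (pr M X x)" fst] by (simp add: Z_def)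
  also have "(\<Sum>w\<in>range Z. pr M Z w * ln (pr M Y (snd w))) = (\<Sum>x\<in>range Y. pr M Y x * ln (pr M Y x))"
    using fiber_sum[OF fZ, of "\<lambda>x. ln (pr M Y x)" snd] by (simp add: Z_def)
  finally show ?thesis using A unfolding Hs_def Z_def by simp
qed

lemma Hs_split:
  fixes X :: "'a \<Rightarrow> 'b" and s :: "'a \<Rightarrow> 'c"
  assumes X: "fv M X" and s: "fv M s"
  shows "Hs M X \<le> Hs M s + (\<Sum>j\<in>range s. pr M s j * ln (real (card (X ` (s -` {j})))))"
proof -
  define N where "N = (\<lambda>j. real (card (X ` (s -` {j}))))"
  define Z where "Z = (\<lambda>z. (s z, X z))"
  have fZ: "fv M Z" unfolding Z_def by (rule fv_pair[OF s X])
  have finX: "finite (range X)" and fins: "finite (range s)" using X s unfolding fv_def by auto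
  have Npos: "N j > 0" if "j \<in> range s" for j
  proof -
    have "finite (X ` (s -` {j}))" using finX by (rule finite_subset[rotated]) auto
    moreover have "X ` (s -` {j}) \<noteq> {}" using that by auto
    ultimately show ?thesis unfolding N_def by (simp add: card_gt_0_iff)
  qed
  define q where "q = (\<lambda>(j::'c,x::'b). pr M s j / N j)"
  have rZ: "range Z = Sigma (range s) (\<lambda>j. X ` (s -` {j}))" unfolding Z_def by (auto simp: image_iff) (metis rangeI)
  have prZ: "pr M Z w \<le> pr M s (fst w)" for w by (auto intro!: pr_mono s simp: Z_def)
  have t: "pr M Z w * ln (q w) \<le> pr M Z w * ln (pr M Z w) + q w - pr M Z w" if "w \<in> range Z" for w
  proof (rule gibbs_term)
    have "fst w \<in> range s" using that by (auto simp: Z_def)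
    then have np: "N (fst w) > 0" by (rule Npos)
    show "0 \<le> pr M Z w" by (rule pr_nonneg)
    show "0 \<le> q w" unfolding q_def using np by (auto simp: pr_nonneg split: prod.splits)
    assume "pr M Z w > 0"
    then have "pr M s (fst w) > 0" using prZ[of w] by simp
    then show "q w > 0" unfolding q_def using np by (auto split: prod.splits)
  qed
  have "(\<Sum>w\<in>range Z. pr M Z w * ln (q w)) \<le> (\<Sum>w\<in>range Z. pr M Z w * ln (pr M Z w) + q w - pr M Z w)"
    by (intro sum_mono t)
  also have "\<dots> = (\<Sum>w\<in>range Z. pr M Z w * ln (pr M Z w)) + (\<Sum>w\<in>range Z. q w) - 1"
    using pr_sum1[OF fZ] by (simp add: sum.distrib sum_subtractf)
  also have "(\<Sum>w\<in>range Z. q w) = (\<Sum>j\<in>range s. \<Sum>x\<in>X ` (s -` {j}). pr M s j / N j)"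
    unfolding rZ q_def by (subst sum.Sigma) (auto intro: fins finite_subset[OF _ finX])
  also have "\<dots> = (\<Sum>j\<in>range s. pr M s j)"
    by (intro sum.cong refl) (use Npos in \<open>auto simp: N_def\<close>)
  also have "\<dots> = 1" by (rule pr_sum1[OF s])
  finally have A: "(\<Sum>w\<in>range Z. pr M Z w * ln (q w)) \<le> (\<Sum>w\<in>range Z. pr M Z w * ln (pr M Z w))" by simp
  have "(\<Sum>w\<in>range Z. pr M Z w * ln (q w)) = (\<Sum>w\<in>range Z. pr M Z w * (\<lambda>j. ln (pr M s j) - ln (N j)) (fst w))"
  proof (intro sum.cong refl)
    fix w assume w: "w \<in> range Z"
    show "pr M Z w * ln (q w) = pr M Z w * (\<lambda>j. ln (pr M s j) - ln (N j)) (fst w)"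
    proof (cases "pr M Z w = 0")
      case True then show ?thesis by simp
    next
      case False
      then have "pr M Z w > 0" using pr_nonneg[of Z w] by simp
      then have "pr M s (fst w) > 0" using prZ[of w] by simp
      moreover have "N (fst w) > 0" using w by (intro Npos) (auto simp: Z_def)
      ultimately show ?thesis unfolding q_def by (auto simp: ln_div split: prod.splits)
    qed
  qed
  also have "\<dots> = (\<Sum>j\<in>range s. pr M s j * (ln (pr M s j) - ln (N j)))"
    using fiber_sum[OF fZ, of "\<lambda>j. ln (pr M s j) - ln (N j)" fst] by (simp add: Z_def)
  also have "\<dots> = (\<Sum>j\<in>range s. pr M s j * ln (pr M s j)) - (\<Sum>j\<in>range s. pr M s j * ln (N j))"
    by (simp add: right_diff_distrib sum_subtractf)
  finally have B: "Hs M Z \<le> Hs M s + (\<Sum>j\<in>range s. pr M s j * ln (N j))"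
    using A unfolding Hs_def by simp
  have "Hs M X \<le> Hs M Z" using Hs_dp[OF fZ, of snd] by (simp add: Z_def)
  with B show ?thesis unfolding N_def by simp
qed

lemma Hs_card: assumes X: "fv M X" shows "Hs M X \<le> ln (real (card (range X)))"
proof -
  have "Hs M X \<le> Hs M (\<lambda>z. ()) + (\<Sum>j\<in>range (\<lambda>z::'a. ()). pr M (\<lambda>z. ()) j * ln (real (card (X ` ((\<lambda>z. ()) -` {j})))))"
    by (rule Hs_split[OF X fv_const])
  moreover have "range (\<lambda>z::'a. ()) = {()}" by auto
  moreover have "pr M (\<lambda>z::'a. ()) () = 1" unfolding pr_def using sp prob_space by simp
  moreover have "X ` ((\<lambda>z. ()) -` {()}) = range X" by auto
  ultimately show ?thesis unfolding Hs_def by simp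
qed

lemma Hs_bool: assumes X: "fv M (X :: 'a \<Rightarrow> bool)" and d: "pr M X True \<le> d"
  shows "Hs M X \<le> 3 * sqrt d"
proof -
  define t where "t = pr M X True"
  have t0: "0 \<le> t" and t1: "t \<le> 1" unfolding t_def by (auto simp: pr_nonneg pr_le1)
  have "X -` {False} = space M - X -` {True}" using sp by auto
  moreover have "X -` {True} \<in> events" using X unfolding fv_def by simp
  ultimately have pf: "pr M X False = 1 - t" unfolding pr_def t_def
    by (metis prob_compl)
  have "Hs M X = (\<Sum>v\<in>range X. - (pr M X v * ln (pr M X v)))" unfolding Hs_def by (simp add: sum_negf)
  also have "\<dots> \<le> (\<Sum>v\<in>UNIV. - (pr M X v * ln (pr M X v)))"
  proof (rule sum_mono2)
    show "finite (UNIV :: bool set)" by simp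
    show "range X \<subseteq> UNIV" by simp
    fix v show "0 \<le> - (pr M X v * ln (pr M X v))"
      using pr_nonneg[of X v] pr_le1[of X v]
      by (cases "pr M X v = 0") (auto simp: mult_nonneg_nonpos)
  qed
  also have "\<dots> = - (t * ln t) - ((1 - t) * ln (1 - t))"
    by (simp add: UNIV_bool pf t_def)
  also have "\<dots> \<le> 2 * sqrt t + t" using negxlnx[OF t0 t1] negxlnx2[OF t0 t1] by simp
  finally have h: "Hs M X \<le> 2 * sqrt t + t" .
  have ts: "t \<le> sqrt t"
  proof -
    have a: "sqrt t \<le> 1" "0 \<le> sqrt t" using t1 t0 by auto
    have "t = sqrt t * sqrt t" using t0 by simp
    also have "\<dots> \<le> 1 * sqrt t" using a by (intro mult_right_mono) auto
    finally show ?thesis by simp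
  qed
  have sd: "sqrt t \<le> sqrt d" using d unfolding t_def by simp
  have "2 * sqrt t + t \<le> 3 * sqrt d" using ts sd by linarith
  then show ?thesis using h by (rule order.trans[rotated])
qed

end


lemma upto_add: "map (\<lambda>j. j + a) [p..q] = [p+a..q+a]"
  by (rule nth_equalityI) auto

lemma map_shift_upto: "map (\<lambda>j. z (j + a)) [p..q] = map z [p+a..q+a]"
proof -
  have "map (\<lambda>j. z (j + a)) [p..q] = map z (map (\<lambda>j. j + a) [p..q])" by simp
  then show ?thesis by (simp only: upto_add)
qed

definition shiftn :: "int \<Rightarrow> (int \<Rightarrow> 'a) \<Rightarrow> (int \<Rightarrow> 'a)" where
  "shiftn a z = (\<lambda>i. z (i + a))"

definition ishift :: "(int \<Rightarrow> 'a) \<Rightarrow> (int \<Rightarrow> 'a)" where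
  "ishift z = (\<lambda>i. z (i - 1))"

lemma shift_pow: "(shift ^^ t) z = shiftn (int t) z"
  by (induction t arbitrary: z) (auto simp: shiftn_def shift_def add.assoc)

lemma ishift_pow: "(ishift ^^ t) z = shiftn (- int t) z"
  by (induction t arbitrary: z) (auto simp: shiftn_def ishift_def algebra_simps)

lemma ca_local:
  assumes "cellular_automaton F r" "\<And>j. \<bar>j - p\<bar> \<le> int r \<Longrightarrow> x j = y j"
  shows "F x p = F y p"
proof -
  obtain f where f: "\<And>x i. F x i = f (map x [i - int r .. i + int r])"
    using assms(1) unfolding cellular_automaton_def by blast
  have e: "map x [p - int r .. p + int r] = map y [p - int r .. p + int r]"
    using assms(2) by (intro map_eq_conv[THEN iffD2]) auto
  show ?thesis by (simp only: f e)
qed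

lemma ca_shift:
  assumes "cellular_automaton F r"
  shows "F (shiftn a z) = shiftn a (F z)"
proof -
  obtain f where f: "\<And>x i. F x i = f (map x [i - int r .. i + int r])"
    using assms(1) unfolding cellular_automaton_def by blast
  show ?thesis unfolding shiftn_def
    by (rule ext) (simp add: f map_shift_upto algebra_simps)
qed

lemma ca_pow_shift:
  assumes "cellular_automaton F r"
  shows "(F ^^ i) (shiftn a z) = shiftn a ((F ^^ i) z)"
  by (induction i) (simp_all add: ca_shift[OF assms])

lemma cantor_agree:
  assumes "cantor_dist x y < 2 powr (- real n)" "\<bar>j\<bar> \<le> int n"
  shows "x j = y j"
proof (rule ccontr)
  assume ne: "x j \<noteq> y j"
  then have "x \<noteq> y" by auto
  have "(LEAST k::nat. \<exists>j. nat \<bar>j\<bar> = k \<and> x j \<noteq> y j) \<le> nat \<bar>j\<bar>"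
    using ne by (intro Least_le) auto
  also have "nat \<bar>j\<bar> \<le> n" using assms(2) by simp
  finally have le: "real (LEAST k::nat. \<exists>j. nat \<bar>j\<bar> = k \<and> x j \<noteq> y j) \<le> real n" by simp
  have "2 powr (- real n) \<le> 2 powr (- real (LEAST k::nat. \<exists>j. nat \<bar>j\<bar> = k \<and> x j \<noteq> y j))"
    using le by (intro powr_mono) auto
  then show False using assms(1) \<open>x \<noteq> y\<close> unfolding cantor_dist_def by simp
qed

definition wall :: "((int \<Rightarrow> 'a) \<Rightarrow> (int \<Rightarrow> 'a)) \<Rightarrow> nat \<Rightarrow> (int \<Rightarrow> 'a) \<Rightarrow> int \<Rightarrow> (int \<Rightarrow> 'a) set" where
  "wall F r x0 a = {z. \<forall>i j. \<bar>j\<bar> \<le> int r \<longrightarrow> (F ^^ i) z (a + j) = (F ^^ i) x0 j}"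

lemma Bball_wall: "Bball F r x0 \<subseteq> wall F r x0 0"
proof (rule subsetI)
  fix y assume "y \<in> Bball F r x0"
  then have h: "\<And>i. cantor_dist ((F^^i) x0) ((F^^i) y) < 2 powr - real r" unfolding Bball_def by simp
  have "(F^^i) y j = (F^^i) x0 j" if "\<bar>j\<bar> \<le> int r" for i j
    using cantor_agree[OF h that] by simp
  then show "y \<in> wall F r x0 0" unfolding wall_def by simp
qed

lemma wall_shift:
  assumes "cellular_automaton F r"
  shows "z \<in> wall F r x0 a \<longleftrightarrow> shiftn a z \<in> wall F r x0 0"
proof -
  have h: "(F^^i) (shiftn a z) j = (F^^i) z (a + j)" for i j
    using fun_cong[OF ca_pow_shift[OF assms, of i a z], of j] by (simp add: shiftn_def add.commute)
  show ?thesis unfolding wall_def by (simp add: h)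
qed

lemma wall_determ:
  assumes ca: "cellular_automaton F r"
    and za: "z \<in> wall F r x0 a" and zb: "z \<in> wall F r x0 b"
    and za': "z' \<in> wall F r x0 a" and zb': "z' \<in> wall F r x0 b"
    and ag: "\<And>p. a - int r \<le> p \<Longrightarrow> p \<le> b + int r \<Longrightarrow> z p = z' p"
  shows "a - int r \<le> p \<Longrightarrow> p \<le> b + int r \<Longrightarrow> (F ^^ i) z p = (F ^^ i) z' p"
proof (induction i arbitrary: p)
  case 0 then show ?case using ag by simp
next
  case (Suc i)
  show ?case
  proof (cases "\<bar>p - a\<bar> \<le> int r \<or> \<bar>p - b\<bar> \<le> int r")
    case True
    then show ?thesis
    proof
      assume h: "\<bar>p - a\<bar> \<le> int r"
      have "(F ^^ Suc i) z (a + (p - a)) = (F ^^ Suc i) x0 (p - a)"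
        using za h unfolding wall_def by blast
      moreover have "(F ^^ Suc i) z' (a + (p - a)) = (F ^^ Suc i) x0 (p - a)"
        using za' h unfolding wall_def by blast
      ultimately show ?thesis by simp
    next
      assume h: "\<bar>p - b\<bar> \<le> int r"
      have "(F ^^ Suc i) z (b + (p - b)) = (F ^^ Suc i) x0 (p - b)"
        using zb h unfolding wall_def by blast
      moreover have "(F ^^ Suc i) z' (b + (p - b)) = (F ^^ Suc i) x0 (p - b)"
        using zb' h unfolding wall_def by blast
      ultimately show ?thesis by simp
    qed
  next
    case False
    then have in1: "a + int r < p" "p < b - int r" using Suc.prems by auto
    have "F ((F ^^ i) z) p = F ((F ^^ i) z') p"
      by (rule ca_local[OF ca]) (use in1 in \<open>intro Suc.IH; auto\<close>)
    then show ?thesis by simp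
  qed
qed


lemma funpow_meas: "T \<in> measurable M M \<Longrightarrow> (T ^^ t) \<in> measurable M M"
  by (induction t) (auto simp: measurable_ident_sets)

context ent begin

lemma recur:
  assumes T: "T \<in> measurable M M"
    and pres: "\<And>S. S \<in> sets M \<Longrightarrow> measure M (T -` S) = measure M S"
    and er: "\<And>A. A \<in> sets M \<Longrightarrow> T -` A = A \<Longrightarrow> measure M A = 0 \<or> measure M A = 1"
    and S: "S \<in> sets M" "measure M S > 0"
  shows "measure M (\<Union>t\<in>{K..}. (T^^t) -` S) = 1"
proof -
  define V where "V K = (\<Union>t\<in>{K..}. (T^^t) -` S)" for K
  have pre: "(T^^t) -` A \<in> sets M" if "A \<in> sets M" for t A
    using measurable_sets[OF funpow_meas[OF T] that] sp by simp
  have Vs: "V K \<in> sets M" for K unfolding V_def using pre[OF S(1)] by (intro sets.countable_UN) auto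
  have VSuc: "V (Suc K) = T -` V K" for K
  proof
    show "V (Suc K) \<subseteq> T -` V K"
    proof
      fix x assume "x \<in> V (Suc K)"
      then obtain t where t: "t \<ge> Suc K" "(T^^t) x \<in> S" unfolding V_def by auto
      then obtain t' where t': "t = Suc t'" "t' \<ge> K" by (cases t) auto
      have "(T^^t') (T x) \<in> S" using t t' by (simp add: funpow_Suc_right del: funpow.simps)
      then show "x \<in> T -` V K" using t' unfolding V_def by auto
    qed
  next
    show "T -` V K \<subseteq> V (Suc K)"
    proof
      fix x assume "x \<in> T -` V K"
      then obtain t where t: "t \<ge> K" "(T^^t) (T x) \<in> S" unfolding V_def by auto
      then have "(T^^Suc t) x \<in> S" by (simp add: funpow_Suc_right del: funpow.simps)
      then show "x \<in> V (Suc K)" using t unfolding V_def by (intro UN_I[of "Suc t"]) auto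
    qed
  qed
  have Vm: "measure M (V K) = measure M (V 0)" for K
  proof (induction K)
    case 0 then show ?case by simp
  next
    case (Suc K)
    have "measure M (V (Suc K)) = measure M (T -` V K)" by (simp only: VSuc)
    also have "\<dots> = measure M (V K)" by (rule pres[OF Vs])
    finally show ?case using Suc.IH by simp
  qed
  have dec: "decseq V" unfolding V_def by (intro decseq_SucI UN_mono) auto
  define I where "I = (\<Inter>K. V K)"
  have Is: "I \<in> sets M" unfolding I_def using Vs by (intro sets.countable_INT) auto
  have "(\<lambda>K. measure M (V K)) \<longlonglongrightarrow> measure M I"
    unfolding I_def using Vs dec by (intro finite_Lim_measure_decseq) auto
  moreover have "(\<lambda>K. measure M (V K)) \<longlonglongrightarrow> measure M (V 0)"
  proof -
    have "(\<lambda>K. measure M (V K)) = (\<lambda>_. measure M (V 0))" by (rule ext) (rule Vm)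
    then show ?thesis by (simp del: Vm)
  qed
  ultimately have mI: "measure M I = measure M (V 0)" by (rule LIMSEQ_unique)
  have "S \<subseteq> V 0" unfolding V_def by (auto intro: UN_I[of 0])
  then have "measure M S \<le> measure M (V 0)" using Vs by (intro finite_measure_mono) auto
  then have Ipos: "measure M I > 0" using S mI by simp
  have "T -` I = I"
  proof -
    have "T -` I = (\<Inter>K. T -` V K)" unfolding I_def by auto
    also have "\<dots> = (\<Inter>K. V (Suc K))" by (simp only: VSuc)
    also have "\<dots> = I"
    proof
      show "(\<Inter>K. V (Suc K)) \<subseteq> I"
      proof
        fix x assume x: "x \<in> (\<Inter>K. V (Suc K))"
        have "x \<in> V K" for K using x decseq_SucD[OF dec, of K] by auto
        then show "x \<in> I" unfolding I_def by auto
      qed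
      show "I \<subseteq> (\<Inter>K. V (Suc K))" unfolding I_def by auto
    qed
    finally show ?thesis .
  qed
  then have "measure M I = 1" using er[OF Is] Ipos by auto
  moreover have "I \<subseteq> V K" unfolding I_def by auto
  ultimately have "1 \<le> measure M (V K)" using finite_measure_mono[OF _ Vs] by metis
  then have "measure M (V K) = 1" using prob_le_1[of "V K"] by simp
  then show ?thesis unfolding V_def .
qed

lemma recur_trunc:
  assumes T: "T \<in> measurable M M"
    and full: "measure M (\<Union>t\<in>{K..}. (T^^t) -` S) = 1"
    and S: "S \<in> sets M" and eta: "\<eta> > 0"
  shows "\<exists>N. measure M (\<Union>t\<in>{K..N}. (T^^t) -` S) > 1 - \<eta>"
proof -
  have pre: "(T^^t) -` A \<in> sets M" if "A \<in> sets M" for t A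
    using measurable_sets[OF funpow_meas[OF T] that] sp by simp
  define A where "A N = (\<Union>t\<in>{K..N}. (T^^t) -` S)" for N
  have As: "range A \<subseteq> sets M" unfolding A_def using pre[OF S] by auto
  have inc: "incseq A" unfolding A_def by (intro monoI UN_mono) auto
  have U: "(\<Union>N. A N) = (\<Union>t\<in>{K..}. (T^^t) -` S)" unfolding A_def by (auto; metis atLeastAtMost_iff order_refl)
  have "(\<lambda>N. measure M (A N)) \<longlonglongrightarrow> 1"
    using finite_Lim_measure_incseq[OF As inc] U full by simp
  then have "eventually (\<lambda>N. measure M (A N) > 1 - \<eta>) sequentially"
    using eta by (intro order_tendstoD(1)) auto
  then obtain N where "measure M (A N) > 1 - \<eta>" using eventually_sequentially by auto
  then show ?thesis unfolding A_def by blast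
qed

end

locale setting =
  fixes F :: "(int \<Rightarrow> 'a::finite) \<Rightarrow> (int \<Rightarrow> 'a)" and r :: nat and \<mu> :: "(int \<Rightarrow> 'a) measure"
  assumes ca: "cellular_automaton F r" and ps: "prob_space \<mu>"
    and sq: "sets \<mu> = sets full_shift_space"
    and erg: "ergodic \<mu> shift" and inv: "invariant_measure \<mu> F"
begin

lemma space_full: "space full_shift_space = UNIV"
  unfolding full_shift_space_def space_PiM by (auto simp: PiE_def extensional_def)

lemma sp: "space \<mu> = UNIV" using sets_eq_imp_space_eq[OF sq] space_full by simp

sublocale ent \<mu> using ps sp by (simp add: ent_def ent_axioms_def)

lemma meas_cong: "measurable \<mu> \<mu> = measurable full_shift_space full_shift_space"
  by (rule measurable_cong_sets[OF sq sq])

lemma coord_meas: "(\<lambda>x. x j) \<in> measurable \<mu> (count_space UNIV)"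
proof -
  have h: "(\<lambda>x. x j) \<in> measurable full_shift_space (count_space UNIV)"
    unfolding full_shift_space_def by (rule measurable_component_singleton) simp
  have e: "measurable \<mu> (count_space UNIV) = measurable full_shift_space (count_space UNIV)"
    by (rule measurable_cong_sets[OF sq refl])
  show ?thesis unfolding e by (rule h)
qed

lemma coord_set: "{z. z j = c} \<in> sets \<mu>"
proof -
  have "(\<lambda>x. x j) -` {c} \<inter> space \<mu> \<in> sets \<mu>" by (rule measurable_sets[OF coord_meas]) simp
  then show ?thesis using sp by (simp add: vimage_def)
qed

lemma ishift_meas: "ishift \<in> measurable \<mu> \<mu>"
proof -
  have "(\<lambda>\<omega> i. (\<lambda>i \<omega>. \<omega> (i - 1)) i \<omega>) \<in> measurable full_shift_space full_shift_space"
    unfolding full_shift_space_def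
    by (rule measurable_PiM_single') (auto simp: space_PiM PiE_def extensional_def)
  then show ?thesis unfolding meas_cong ishift_def by simp
qed

lemma F_meas: "F \<in> measurable \<mu> \<mu>" using inv unfolding invariant_measure_def by simp
lemma shift_meas: "shift \<in> measurable \<mu> \<mu>" using erg unfolding ergodic_def invariant_measure_def by simp

lemma pres_of:
  assumes "T \<in> measurable \<mu> \<mu>" "distr \<mu> \<mu> T = \<mu>" "S \<in> sets \<mu>"
  shows "measure \<mu> (T -` S) = measure \<mu> S"
proof -
  have "measure (distr \<mu> \<mu> T) S = measure \<mu> (T -` S \<inter> space \<mu>)" by (rule measure_distr[OF assms(1,3)])
  then show ?thesis using assms(2) sp by simp
qed

lemma F_pres: "S \<in> sets \<mu> \<Longrightarrow> measure \<mu> (F -` S) = measure \<mu> S"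
  using pres_of[OF F_meas] inv unfolding invariant_measure_def by simp

lemma shift_pres: "S \<in> sets \<mu> \<Longrightarrow> measure \<mu> (shift -` S) = measure \<mu> S"
  using pres_of[OF shift_meas] erg unfolding invariant_measure_def ergodic_def by simp

lemma pre_sets: "T \<in> measurable \<mu> \<mu> \<Longrightarrow> S \<in> sets \<mu> \<Longrightarrow> T -` S \<in> sets \<mu>"
  using measurable_sets[of T \<mu> \<mu> S] sp by simp

lemma shift_ishift: "ishift (shift z) = z" unfolding ishift_def shift_def by simp

lemma ishift_pres: "S \<in> sets \<mu> \<Longrightarrow> measure \<mu> (ishift -` S) = measure \<mu> S"
proof -
  assume S: "S \<in> sets \<mu>"
  have "shift -` (ishift -` S) = S" by (auto simp: shift_ishift)
  then show ?thesis using shift_pres[OF pre_sets[OF ishift_meas S]] by simp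
qed

lemma Fpow_meas: "(F ^^ i) \<in> measurable \<mu> \<mu>" by (rule funpow_meas[OF F_meas])

lemma Fpow_pres: "S \<in> sets \<mu> \<Longrightarrow> measure \<mu> ((F ^^ i) -` S) = measure \<mu> S"
proof (induction i arbitrary: S)
  case 0 then show ?case by simp
next
  case (Suc i)
  have e: "(F ^^ Suc i) -` S = F -` ((F ^^ i) -` S)" unfolding funpow_Suc_right by auto
  have "measure \<mu> ((F ^^ Suc i) -` S) = measure \<mu> (F -` ((F ^^ i) -` S))" by (simp only: e)
  also have "\<dots> = measure \<mu> ((F ^^ i) -` S)" by (rule F_pres[OF pre_sets[OF Fpow_meas Suc.prems]])
  also have "\<dots> = measure \<mu> S" by (rule Suc.IH[OF Suc.prems])
  finally show ?case .
qed

lemma shift_erg: "A \<in> sets \<mu> \<Longrightarrow> shift -` A = A \<Longrightarrow> measure \<mu> A = 0 \<or> measure \<mu> A = 1"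
  using erg sp unfolding ergodic_def by simp

lemma ishift_erg: "A \<in> sets \<mu> \<Longrightarrow> ishift -` A = A \<Longrightarrow> measure \<mu> A = 0 \<or> measure \<mu> A = 1"
proof -
  assume A: "A \<in> sets \<mu>" "ishift -` A = A"
  have "shift -` A = shift -` (ishift -` A)" using A by simp
  also have "\<dots> = A" by (auto simp: shift_ishift)
  finally show ?thesis using shift_erg A by simp
qed

lemma Fpow_coord_set: "{z. (F ^^ i) z j = c} \<in> sets \<mu>"
  using pre_sets[OF Fpow_meas coord_set, of i j c] by (simp add: vimage_def)

lemma wall_sets: "wall F r x0 a \<in> sets \<mu>"
proof -
  have U: "UNIV \<in> sets \<mu>" using sets.top[of \<mu>] sp by simp
  have "wall F r x0 a = (\<Inter>i. \<Inter>j\<in>{j. \<bar>j\<bar> \<le> int r}. {z. (F ^^ i) z (a + j) = (F ^^ i) x0 j})"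
    unfolding wall_def by auto
  also have "\<dots> \<in> sets \<mu>"
  proof (rule sets.countable_INT)
    show "(\<lambda>i. \<Inter>j\<in>{j. \<bar>j\<bar> \<le> int r}. {z. (F ^^ i) z (a + j) = (F ^^ i) x0 j}) ` UNIV \<subseteq> sets \<mu>"
    proof (rule image_subsetI)
      fix i
      show "(\<Inter>j\<in>{j. \<bar>j\<bar> \<le> int r}. {z. (F ^^ i) z (a + j) = (F ^^ i) x0 j}) \<in> sets \<mu>"
      proof (rule sets.countable_INT)
        have "0 \<in> {j::int. \<bar>j\<bar> \<le> int r}" by simp
        then show "{j::int. \<bar>j\<bar> \<le> int r} \<noteq> {}" by blast
      qed (auto intro: Fpow_coord_set)
    qed
  qed simp
  finally show ?thesis .
qed

end


definition cyl :: "int \<Rightarrow> (int \<Rightarrow> 'a) set \<Rightarrow> bool" where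
  "cyl k C \<longleftrightarrow> (\<forall>x y. (\<forall>j. \<bar>j\<bar> \<le> k \<longrightarrow> x j = y j) \<longrightarrow> (x \<in> C \<longleftrightarrow> y \<in> C))"

lemma cyl_mono: "cyl k C \<Longrightarrow> k \<le> k' \<Longrightarrow> cyl k' C"
  unfolding cyl_def by (meson order_trans)

lemma cyl_compl: "cyl k C \<Longrightarrow> cyl k (UNIV - C)"
  unfolding cyl_def by blast

lemma cyl_UN: "finite I \<Longrightarrow> (\<And>i. i \<in> I \<Longrightarrow> cyl k (C i)) \<Longrightarrow> cyl k (\<Union>i\<in>I. C i)"
  unfolding cyl_def by blast

context setting begin

definition appr :: "(int \<Rightarrow> 'a) set \<Rightarrow> bool" where
  "appr S \<longleftrightarrow> (\<forall>\<eta>>0. \<exists>k C. C \<in> sets \<mu> \<and> cyl k C \<and> measure \<mu> (S - C) + measure \<mu> (C - S) < \<eta>)"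

lemma sets_mu_sigma: "sets \<mu> = sigma_sets UNIV (prod_algebra UNIV (\<lambda>_::int. count_space (UNIV :: 'a set)))"
  using sq space_full unfolding full_shift_space_def by (simp add: sets_PiM space_PiM)

lemma appr_all: assumes "S \<in> sets \<mu>" shows "appr S"
proof -
  have "S \<in> sigma_sets UNIV (prod_algebra UNIV (\<lambda>_::int. count_space (UNIV :: 'a set)))"
    using assms sets_mu_sigma by simp
  then show ?thesis
  proof (induction rule: sigma_sets.induct)
    case (Basic a)
    then obtain J E where a: "a = prod_emb UNIV (\<lambda>_. count_space UNIV) J (PiE J E)" and J: "finite J"
      by (auto elim!: prod_algebraE)
    have as: "a \<in> sets \<mu>" using Basic sets_mu_sigma by auto
    define k where "k = Max (insert 0 (abs ` J))"
    have cy: "cyl k a"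
      unfolding cyl_def
    proof (intro allI impI)
      fix x y :: "int \<Rightarrow> 'a" assume ag: "\<forall>j. \<bar>j\<bar> \<le> k \<longrightarrow> x j = y j"
      have "\<bar>j\<bar> \<le> k" if "j \<in> J" for j unfolding k_def using J that by (intro Max_ge) auto
      then have "restrict x J = restrict y J" using ag by (auto simp: restrict_def)
      then show "x \<in> a \<longleftrightarrow> y \<in> a" unfolding a prod_emb_iff by simp
    qed
    show ?case unfolding appr_def
      by (intro allI impI exI[of _ k] exI[of _ a]) (use as cy in auto)
  next
    case Empty
    show ?case unfolding appr_def
      by (intro allI impI exI[of _ 0] exI[of _ "{}"]) (auto simp: cyl_def)
  next
    case (Compl a)
    have as: "a \<in> sets \<mu>" using Compl sets_mu_sigma by auto
    show ?case unfolding appr_def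
    proof (intro allI impI)
      fix \<eta> :: real assume "\<eta> > 0"
      then obtain k C where C: "C \<in> sets \<mu>" "cyl k C" "measure \<mu> (a - C) + measure \<mu> (C - a) < \<eta>"
        using Compl.IH unfolding appr_def by blast
      have "UNIV - C \<in> sets \<mu>" using C sp by (metis sets.compl_sets)
      moreover have "(UNIV - a) - (UNIV - C) = C - a" "(UNIV - C) - (UNIV - a) = a - C" by auto
      ultimately show "\<exists>k Ca. Ca \<in> sets \<mu> \<and> cyl k Ca \<and> measure \<mu> ((UNIV - a) - Ca) + measure \<mu> (Ca - (UNIV - a)) < \<eta>"
        using C cyl_compl by (intro exI[of _ k] exI[of _ "UNIV - C"]) auto
    qed
  next
    case (Union A)
    have As: "A i \<in> sets \<mu>" for i using Union sets_mu_sigma by auto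
    show ?case unfolding appr_def
    proof (intro allI impI)
      fix \<eta> :: real assume eta: "\<eta> > 0"
      define B where "B N = (\<Union>i<N. A i)" for N
      have Bs: "B N \<in> sets \<mu>" for N unfolding B_def using As by auto
      have Us: "(\<Union>i. A i) \<in> sets \<mu>" using As by auto
      have inc: "incseq B" unfolding B_def by (intro monoI UN_mono) auto
      have UB: "(\<Union>N. B N) = (\<Union>i. A i)" unfolding B_def by auto
      have "(\<lambda>N. measure \<mu> (B N)) \<longlonglongrightarrow> measure \<mu> (\<Union>i. A i)"
        using finite_Lim_measure_incseq[OF _ inc] Bs UB by auto
      then have "eventually (\<lambda>N. measure \<mu> (B N) > measure \<mu> (\<Union>i. A i) - \<eta>/2) sequentially"
        using eta by (intro order_tendstoD(1)) auto
      then obtain N where N: "measure \<mu> (B N) > measure \<mu> (\<Union>i. A i) - \<eta>/2"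
        using eventually_sequentially by auto
      have BU: "B N \<subseteq> (\<Union>i. A i)" unfolding B_def by auto
      have d1: "measure \<mu> ((\<Union>i. A i) - B N) < \<eta>/2"
        using N finite_measure_Diff[OF Us Bs BU] by simp
      define \<eta>' where "\<eta>' = \<eta> / (2 * (real N + 1))"
      have eta': "\<eta>' > 0" unfolding \<eta>'_def using eta by simp
      have "\<forall>i. \<exists>k C. C \<in> sets \<mu> \<and> cyl k C \<and> measure \<mu> (A i - C) + measure \<mu> (C - A i) < \<eta>'"
        using Union.IH eta' unfolding appr_def by blast
      then obtain kf Cf where kC: "\<And>i. Cf i \<in> sets \<mu> \<and> cyl (kf i) (Cf i) \<and> measure \<mu> (A i - Cf i) + measure \<mu> (Cf i - A i) < \<eta>'"
        by metis
      define k where "k = Max (insert 0 (kf ` {..<N}))"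
      define C where "C = (\<Union>i<N. Cf i)"
      have Cs: "C \<in> sets \<mu>" unfolding C_def using kC by auto
      have cy: "cyl k C" unfolding C_def
      proof (rule cyl_UN)
        fix i assume "i \<in> {..<N}"
        then have "kf i \<le> k" unfolding k_def by (intro Max_ge) auto
        then show "cyl k (Cf i)" using kC cyl_mono by blast
      qed simp
      have s1: "(\<Union>i. A i) - C \<subseteq> ((\<Union>i. A i) - B N) \<union> (\<Union>i<N. A i - Cf i)"
        unfolding B_def C_def by auto
      have s2: "C - (\<Union>i. A i) \<subseteq> (\<Union>i<N. Cf i - A i)" unfolding C_def by auto
      have m1: "measure \<mu> ((\<Union>i. A i) - C) \<le> measure \<mu> ((\<Union>i. A i) - B N) + (\<Sum>i<N. measure \<mu> (A i - Cf i))"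
      proof -
        have X1: "(\<Union>i<N. A i - Cf i) \<in> sets \<mu>" by (rule sets.finite_UN) (use As kC in auto)
        have X0: "(\<Union>i. A i) - B N \<in> sets \<mu>" using Us Bs by auto
        have "measure \<mu> ((\<Union>i. A i) - C) \<le> measure \<mu> (((\<Union>i. A i) - B N) \<union> (\<Union>i<N. A i - Cf i))"
          using s1 sets.Un[OF X0 X1] by (intro finite_measure_mono) auto
        also have "\<dots> \<le> measure \<mu> ((\<Union>i. A i) - B N) + measure \<mu> (\<Union>i<N. A i - Cf i)"
          using X0 X1 by (intro measure_Un_le) auto
        also have "measure \<mu> (\<Union>i<N. A i - Cf i) \<le> (\<Sum>i<N. measure \<mu> (A i - Cf i))"
          using As kC by (intro finite_measure_subadditive_finite) auto
        finally show ?thesis by simp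
      qed
      have m2: "measure \<mu> (C - (\<Union>i. A i)) \<le> (\<Sum>i<N. measure \<mu> (Cf i - A i))"
      proof -
        have X2: "(\<Union>i<N. Cf i - A i) \<in> sets \<mu>" by (rule sets.finite_UN) (use As kC in auto)
        have "measure \<mu> (C - (\<Union>i. A i)) \<le> measure \<mu> (\<Union>i<N. Cf i - A i)"
          using s2 X2 by (intro finite_measure_mono) auto
        also have "\<dots> \<le> (\<Sum>i<N. measure \<mu> (Cf i - A i))"
          using As kC by (intro finite_measure_subadditive_finite) auto
        finally show ?thesis .
      qed
      have "(\<Sum>i<N. measure \<mu> (A i - Cf i)) + (\<Sum>i<N. measure \<mu> (Cf i - A i)) = (\<Sum>i<N. measure \<mu> (A i - Cf i) + measure \<mu> (Cf i - A i))"
        by (simp add: sum.distrib)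
      also have "\<dots> \<le> (\<Sum>i<N. \<eta>')" using kC by (intro sum_mono) (simp add: less_imp_le)
      also have "\<dots> = real N * \<eta>'" by simp
      also have "\<dots> \<le> \<eta> / 2" unfolding \<eta>'_def using eta by (simp add: field_simps)
      finally have m3: "(\<Sum>i<N. measure \<mu> (A i - Cf i)) + (\<Sum>i<N. measure \<mu> (Cf i - A i)) \<le> \<eta> / 2" .
      have "measure \<mu> ((\<Union>i. A i) - C) + measure \<mu> (C - (\<Union>i. A i)) < \<eta>"
        using m1 m2 m3 d1 by linarith
      then show "\<exists>k C. C \<in> sets \<mu> \<and> cyl k C \<and> measure \<mu> ((\<Union>i. A i) - C) + measure \<mu> (C - (\<Union>i. A i)) < \<eta>"
        using Cs cy by blast
    qed
  qed
qed

end


definition nu :: "'b set set \<Rightarrow> 'b \<Rightarrow> 'b set" where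
  "nu P z = (THE p. p \<in> P \<and> z \<in> p)"

definition Wn :: "('b \<Rightarrow> 'b) \<Rightarrow> 'b set set \<Rightarrow> nat \<Rightarrow> 'b \<Rightarrow> 'b set list" where
  "Wn F P n z = map (\<lambda>i. nu P ((F ^^ i) z)) [0..<n]"

lemma nu_prop:
  assumes "finite_meas_partition M P" "space M = UNIV"
  shows "nu P z \<in> P \<and> z \<in> nu P z"
proof -
  have ex: "\<exists>p. p \<in> P \<and> z \<in> p" using assms unfolding finite_meas_partition_def by auto
  have un: "p = q" if "p \<in> P" "z \<in> p" "q \<in> P" "z \<in> q" for p q
    using assms that unfolding finite_meas_partition_def by blast
  show ?thesis unfolding nu_def by (rule theI'[of "\<lambda>p. p \<in> P \<and> z \<in> p"]) (use ex un in blast)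
qed

lemma nu_eq:
  assumes "finite_meas_partition M P" "space M = UNIV" "p \<in> P"
  shows "nu P z = p \<longleftrightarrow> z \<in> p"
proof -
  have un: "p = q" if "p \<in> P" "z \<in> p" "q \<in> P" "z \<in> q" for p q
    using assms that unfolding finite_meas_partition_def by blast
  show ?thesis using nu_prop[OF assms(1,2), of z] un assms(3) by blast
qed

context setting begin

lemma fv_nu: assumes P: "finite_meas_partition \<mu> P" shows "fv \<mu> (nu P)"
proof -
  have "range (nu P) \<subseteq> P" using nu_prop[OF P sp] by auto
  moreover have "finite P" using P unfolding finite_meas_partition_def by simp
  moreover have "nu P -` {p} = (if p \<in> P then p else {})" for p
    using nu_prop[OF P sp] nu_eq[OF P sp] by auto
  moreover have "P \<subseteq> sets \<mu>" using P unfolding finite_meas_partition_def by simp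
  ultimately show ?thesis unfolding fv_def by (auto intro: finite_subset)
qed

lemma fv_Wn: assumes P: "finite_meas_partition \<mu> P" shows "fv \<mu> (Wn F P n)"
  unfolding Wn_def by (intro fv_list fv_pre[OF fv_nu[OF P] Fpow_meas])

lemma PE_eq:
  assumes P: "finite_meas_partition \<mu> P"
  shows "partition_entropy \<mu> (iter_join \<mu> F P n) = Hs \<mu> (Wn F P n)"
proof -
  define f where "f L = Wn F P n -` {L}" for L
  define LS where "LS = {L. set L \<subseteq> P \<and> length L = n}"
  have finP: "finite P" using P unfolding finite_meas_partition_def by simp
  have cell: "UNIV \<inter> (\<Inter>i<n. (F ^^ i) -` c i) = f (map c [0..<n])" if "\<forall>i<n. c i \<in> P" for c
  proof -
    have "z \<in> (\<Inter>i<n. (F ^^ i) -` c i) \<longleftrightarrow> Wn F P n z = map c [0..<n]" for z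
    proof -
      have "z \<in> (\<Inter>i<n. (F ^^ i) -` c i) \<longleftrightarrow> (\<forall>i<n. nu P ((F ^^ i) z) = c i)"
        using nu_eq[OF P sp] that by auto
      also have "\<dots> \<longleftrightarrow> Wn F P n z = map c [0..<n]" unfolding Wn_def
        by (auto simp: map_eq_conv)
      finally show ?thesis .
    qed
    then show ?thesis unfolding f_def by auto
  qed
  have ij: "iter_join \<mu> F P n = f ` LS"
  proof
    show "iter_join \<mu> F P n \<subseteq> f ` LS"
    proof
      fix A assume "A \<in> iter_join \<mu> F P n"
      then obtain c where c: "\<forall>i<n. c i \<in> P" "A = UNIV \<inter> (\<Inter>i<n. (F ^^ i) -` c i)"
        unfolding iter_join_def sp by auto
      have "map c [0..<n] \<in> LS" unfolding LS_def using c by auto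
      then show "A \<in> f ` LS" using cell[OF c(1)] c(2) by auto
    qed
  next
    show "f ` LS \<subseteq> iter_join \<mu> F P n"
    proof
      fix A assume "A \<in> f ` LS"
      then obtain L where L: "L \<in> LS" "A = f L" by auto
      define c where "c i = L ! i" for i
      have c: "\<forall>i<n. c i \<in> P" using L unfolding LS_def c_def by auto
      have "map c [0..<n] = L" using L unfolding LS_def c_def by (intro nth_equalityI) auto
      then have "A = UNIV \<inter> (\<Inter>i<n. (F ^^ i) -` c i)" using cell[OF c] L by simp
      then show "A \<in> iter_join \<mu> F P n" unfolding iter_join_def sp using c by blast
    qed
  qed
  have finLS: "finite LS" unfolding LS_def using finP by (rule finite_lists_length_eq)
  have rW: "range (Wn F P n) \<subseteq> LS" unfolding LS_def Wn_def using nu_prop[OF P sp] by auto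
  define g where "g A = measure \<mu> A * ln (measure \<mu> A)" for A
  have "(\<Sum>A\<in>f ` LS. g A) = (\<Sum>A\<in>f ` range (Wn F P n). g A)"
  proof (rule sum.mono_neutral_right)
    show "finite (f ` LS)" using finLS by simp
    show "f ` range (Wn F P n) \<subseteq> f ` LS" using rW by auto
    show "\<forall>A\<in>f ` LS - f ` range (Wn F P n). g A = 0"
    proof
      fix A assume "A \<in> f ` LS - f ` range (Wn F P n)"
      then obtain L where "A = f L" "L \<notin> range (Wn F P n)" by auto
      then have "A = {}" unfolding f_def by auto
      then show "g A = 0" unfolding g_def by simp
    qed
  qed
  also have "\<dots> = (\<Sum>L\<in>range (Wn F P n). g (f L))"
  proof -
    have inj: "inj_on f (range (Wn F P n))"
    proof (rule inj_onI)
      fix L L' assume "L \<in> range (Wn F P n)" "L' \<in> range (Wn F P n)" "f L = f L'"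
      then obtain z where "Wn F P n z = L" "z \<in> f L'" unfolding f_def by auto
      then show "L = L'" unfolding f_def by auto
    qed
    show ?thesis using sum.reindex[OF inj, of g] by simp
  qed
  finally show ?thesis unfolding partition_entropy_def Hs_def ij g_def f_def pr_def by simp
qed

end


context ent begin
lemma bool_sum: assumes "fv M (X :: 'a \<Rightarrow> bool)"
  shows "(\<Sum>u\<in>range X. pr M X u * (if u then 1 else 0)) = pr M X True"
proof -
  have "(\<Sum>u\<in>range X. pr M X u * (if u then 1 else 0)) = (\<Sum>u\<in>UNIV. pr M X u * (if u then 1 else 0))"
  proof (rule sum.mono_neutral_left)
    show "\<forall>u\<in>UNIV - range X. pr M X u * (if u then 1 else 0) = 0"
    proof
      fix u assume "u \<in> UNIV - range X"
      then have "X -` {u} = {}" by auto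
      then show "pr M X u * (if u then 1 else 0) = 0" unfolding pr_def by simp
    qed
  qed auto
  also have "\<dots> = pr M X True" by (simp add: UNIV_bool)
  finally show ?thesis .
qed
end

lemma card_count: "real (card {i. i < (n::nat) \<and> P i}) = (\<Sum>i<n. if P i then 1 else 0)"
proof -
  have "(\<Sum>i<n. if P i then 1 else (0::real)) = (\<Sum>i\<in>{x\<in>{..<n}. P x}. 1)"
    by (rule sum.inter_filter[symmetric]) simp
  moreover have "{x\<in>{..<n}. P x} = {i. i < n \<and> P i}" by auto
  ultimately show ?thesis by simp
qed

locale est = setting F r \<mu> for F :: "(int \<Rightarrow> 'a::finite) \<Rightarrow> (int \<Rightarrow> 'a)" and r \<mu> +
  fixes P x0 \<delta> D \<psi> k K N1 N2
  assumes P: "finite_meas_partition \<mu> P"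
    and Ds: "D \<in> sets \<mu>" and Dm: "measure \<mu> D \<le> \<delta>"
    and psi_cyl: "\<And>x y. (\<And>j. \<bar>j\<bar> \<le> k \<Longrightarrow> x j = y j) \<Longrightarrow> \<psi> x = \<psi> y"
    and psiD: "\<And>z. z \<notin> D \<Longrightarrow> nu P z = \<psi> z"
    and kK: "k \<le> int K"
    and Gm: "measure \<mu> (UNIV - ((\<Union>t\<in>{K..N1}. wall F r x0 (int t)) \<inter> (\<Union>t\<in>{K..N2}. wall F r x0 (- int t)))) \<le> \<delta>"
begin

definition "G = (\<Union>t\<in>{K..N1}. wall F r x0 (int t)) \<inter> (\<Union>t\<in>{K..N2}. wall F r x0 (- int t))"
definition "Mx = int (max N1 N2)"
definition "U z = (map (\<lambda>a. z \<in> wall F r x0 a) [-Mx..Mx], map z [-Mx - int r..Mx + int r])"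
definition "b i z = ((F^^i) z \<in> D)"
definition "Bn n z = map (\<lambda>i. b i z) [0..<n]"
definition "s n z = (U z, Bn n z)"
definition "m = card P"
definition "cnt bl = card {i. i < length bl \<and> bl ! i}"
definition "bad j = (\<exists>z. U z = fst j \<and> z \<notin> G)"

lemma fv_coord: "fv \<mu> (\<lambda>z. z j)"
  unfolding fv_def using coord_set by (auto simp: vimage_def)

lemma fv_U: "fv \<mu> U"
  unfolding U_def by (intro fv_pair fv_list fv_set wall_sets fv_coord)

lemma fv_b: "fv \<mu> (b i)"
proof -
  have "fv \<mu> (\<lambda>z. (\<lambda>y. y \<in> D) ((F^^i) z))" by (rule fv_pre[OF fv_set[OF Ds] Fpow_meas])
  then show ?thesis unfolding b_def by simp
qed

lemma fv_Bn: "fv \<mu> (Bn n)" unfolding Bn_def by (intro fv_list fv_b)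

lemma fv_s: "fv \<mu> (s n)" unfolding s_def by (intro fv_pair fv_U fv_Bn)

lemma U_walls: assumes "U z = U z'" "\<bar>a\<bar> \<le> Mx" shows "z \<in> wall F r x0 a \<longleftrightarrow> z' \<in> wall F r x0 a"
proof -
  have "map (\<lambda>a. z \<in> wall F r x0 a) [-Mx..Mx] = map (\<lambda>a. z' \<in> wall F r x0 a) [-Mx..Mx]"
    using assms(1) unfolding U_def by simp
  then have h: "\<forall>x\<in>{-Mx..Mx}. (z \<in> wall F r x0 x) = (z' \<in> wall F r x0 x)" by (simp add: map_eq_conv)
  have "a \<in> {-Mx..Mx}" using assms(2) by auto
  then show ?thesis using h by blast
qed

lemma U_window: assumes "U z = U z'" "-Mx - int r \<le> p" "p \<le> Mx + int r" shows "z p = z' p"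
proof -
  have "map z [-Mx - int r..Mx + int r] = map z' [-Mx - int r..Mx + int r]"
    using assms(1) unfolding U_def by simp
  then show ?thesis using assms(2,3) by (auto simp: map_eq_conv)
qed

lemma G_det: assumes "U z = U z'" "z \<in> G" shows "z' \<in> G"
proof -
  from assms(2) obtain t1 t2 where t: "t1 \<in> {K..N1}" "z \<in> wall F r x0 (int t1)"
      "t2 \<in> {K..N2}" "z \<in> wall F r x0 (- int t2)" unfolding G_def by auto
  have "\<bar>int t1\<bar> \<le> Mx" "\<bar>- int t2\<bar> \<le> Mx" using t unfolding Mx_def by auto
  then have "z' \<in> wall F r x0 (int t1)" "z' \<in> wall F r x0 (- int t2)"
    using U_walls[OF assms(1)] t by auto
  then show ?thesis unfolding G_def using t by auto
qed

lemma psi_det: assumes "U z = U z0" "z0 \<in> G" shows "\<psi> ((F^^i) z) = \<psi> ((F^^i) z0)"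
proof -
  from assms(2) obtain t1 t2 where t: "t1 \<in> {K..N1}" "z0 \<in> wall F r x0 (int t1)"
      "t2 \<in> {K..N2}" "z0 \<in> wall F r x0 (- int t2)" unfolding G_def by auto
  have bd: "\<bar>int t1\<bar> \<le> Mx" "\<bar>- int t2\<bar> \<le> Mx" using t unfolding Mx_def by auto
  then have w: "z \<in> wall F r x0 (int t1)" "z \<in> wall F r x0 (- int t2)"
    using U_walls[OF assms(1)] t by auto
  have ag: "z p = z0 p" if "- int t2 - int r \<le> p" "p \<le> int t1 + int r" for p
    using U_window[OF assms(1)] that bd by auto
  have det: "(F^^i) z p = (F^^i) z0 p" if "- int t2 - int r \<le> p" "p \<le> int t1 + int r" for p
    by (rule wall_determ[OF ca w(2) w(1) t(4) t(2) ag that])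
  show ?thesis
  proof (rule psi_cyl)
    fix j assume "\<bar>j\<bar> \<le> k"
    then have "- int t2 - int r \<le> j" "j \<le> int t1 + int r" using kK t by auto
    then show "(F^^i) z j = (F^^i) z0 j" by (rule det)
  qed
qed

lemma Hs_Bn: "Hs \<mu> (Bn n) \<le> real n * (3 * sqrt \<delta>)"
proof (induction n)
  case 0
  have "Bn 0 = (\<lambda>z. [])" unfolding Bn_def by auto
  then show ?case unfolding Hs_def pr_def using sp prob_space by simp
next
  case (Suc n)
  have e: "Bn (Suc n) = (\<lambda>z. (\<lambda>(l, x). l @ [x]) (Bn n z, b n z))" unfolding Bn_def by auto
  have "Hs \<mu> (Bn (Suc n)) \<le> Hs \<mu> (\<lambda>z. (Bn n z, b n z))"
    unfolding e by (rule Hs_dp[OF fv_pair[OF fv_Bn fv_b]])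
  also have "\<dots> \<le> Hs \<mu> (Bn n) + Hs \<mu> (b n)" by (rule Hs_pair[OF fv_Bn fv_b])
  also have "Hs \<mu> (b n) \<le> 3 * sqrt \<delta>"
  proof (rule Hs_bool[OF fv_b])
    have "b n -` {True} = (F^^n) -` D" unfolding b_def by auto
    then show "pr \<mu> (b n) True \<le> \<delta>" unfolding pr_def using Fpow_pres[OF Ds] Dm by simp
  qed
  finally show ?case using Suc.IH by (simp add: algebra_simps)
qed

lemma Hs_s: "Hs \<mu> (s n) \<le> ln (real (card (range U))) + real n * (3 * sqrt \<delta>)"
proof -
  have "Hs \<mu> (s n) \<le> Hs \<mu> U + Hs \<mu> (Bn n)" unfolding s_def by (rule Hs_pair[OF fv_U fv_Bn])
  then show ?thesis using Hs_card[OF fv_U] Hs_Bn[of n] by simp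
qed

end


context est begin

lemma finP: "finite P" using P unfolding finite_meas_partition_def by simp

lemma m_pos: "m \<ge> 1"
proof -
  have "P \<noteq> {}" using P sp unfolding finite_meas_partition_def by auto
  then show ?thesis unfolding m_def using finP by (simp add: Suc_le_eq card_gt_0_iff)
qed

lemma card_fiber:
  assumes j: "j \<in> range (s n)"
  shows "card (Wn F P n ` (s n -` {j})) \<le> m ^ (cnt (snd j) + (if bad j then n else 0))"
proof -
  define LS where "LS = {L. set L \<subseteq> P \<and> length L = n}"
  have finLS: "finite LS" unfolding LS_def using finP by (rule finite_lists_length_eq)
  have cLS: "card LS = m ^ n" unfolding LS_def m_def using finP by (rule card_lists_length_eq)
  have sub: "Wn F P n ` (s n -` {j}) \<subseteq> LS" unfolding LS_def Wn_def using nu_prop[OF P sp] by auto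
  obtain z0 where z0: "s n z0 = j" using j by auto
  have lj: "length (snd j) = n" using z0 unfolding s_def Bn_def by auto
  show ?thesis
  proof (cases "bad j")
    case True
    have "card (Wn F P n ` (s n -` {j})) \<le> card LS" using sub finLS by (rule card_mono[rotated])
    also have "\<dots> = m ^ n" by (rule cLS)
    also have "\<dots> \<le> m ^ (cnt (snd j) + (if bad j then n else 0))"
      using True m_pos by (intro power_increasing) auto
    finally show ?thesis .
  next
    case False
    have z0G: "z0 \<in> G" using False z0 unfolding bad_def s_def by auto
    define Bad where "Bad = {i. i < n \<and> snd j ! i}"
    define T where "T = {L \<in> LS. \<forall>i<n. \<not> snd j ! i \<longrightarrow> L ! i = \<psi> ((F^^i) z0)}"
    have sub2: "Wn F P n ` (s n -` {j}) \<subseteq> T"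
    proof
      fix L assume "L \<in> Wn F P n ` (s n -` {j})"
      then obtain z where z: "s n z = j" "L = Wn F P n z" by auto
      have Uz: "U z = U z0" using z z0 unfolding s_def by auto
      have "L ! i = \<psi> ((F^^i) z0)" if i: "i < n" "\<not> snd j ! i" for i
      proof -
        have "snd j ! i = b i z" using z(1) i(1) unfolding s_def Bn_def by auto
        then have "(F^^i) z \<notin> D" using i(2) unfolding b_def by simp
        then have "nu P ((F^^i) z) = \<psi> ((F^^i) z)" by (rule psiD)
        also have "\<dots> = \<psi> ((F^^i) z0)" by (rule psi_det[OF Uz z0G])
        finally show ?thesis using z(2) i(1) unfolding Wn_def by simp
      qed
      moreover have "L \<in> LS" using sub z by auto
      ultimately show "L \<in> T" unfolding T_def by auto
    qed
    have finT: "finite T" unfolding T_def using finLS by simp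
    have finBad: "finite Bad" unfolding Bad_def by simp
    have "card T \<le> card (PiE Bad (\<lambda>_. P))"
    proof (rule card_inj_on_le)
      show "inj_on (\<lambda>L. restrict (\<lambda>i. L ! i) Bad) T"
      proof (rule inj_onI)
        fix L L' assume L: "L \<in> T" "L' \<in> T" and eq: "restrict (\<lambda>i. L ! i) Bad = restrict (\<lambda>i. L' ! i) Bad"
        have len: "length L = n" "length L' = n" using L unfolding T_def LS_def by auto
        show "L = L'"
        proof (rule nth_equalityI)
          show "length L = length L'" using len by simp
          fix i assume "i < length L"
          then have i: "i < n" using len by simp
          show "L ! i = L' ! i"
          proof (cases "snd j ! i")
            case True
            then have "i \<in> Bad" unfolding Bad_def using i by simp
            then show ?thesis using fun_cong[OF eq, of i] by simp
          next
            case False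
            then show ?thesis using L i unfolding T_def by auto
          qed
        qed
      qed
      show "(\<lambda>L. restrict (\<lambda>i. L ! i) Bad) ` T \<subseteq> PiE Bad (\<lambda>_. P)"
      proof
        fix X assume "X \<in> (\<lambda>L. restrict (\<lambda>i. L ! i) Bad) ` T"
        then obtain L where L: "L \<in> T" "X = restrict (\<lambda>i. L ! i) Bad" by auto
        have "set L \<subseteq> P" "length L = n" using L unfolding T_def LS_def by auto
        then have "L ! i \<in> P" if "i \<in> Bad" for i using that unfolding Bad_def by auto
        then show "X \<in> PiE Bad (\<lambda>_. P)" using L by auto
      qed
      show "finite (PiE Bad (\<lambda>_. P))" using finBad finP by (simp add: finite_PiE)
    qed
    also have "card (PiE Bad (\<lambda>_. P)) = m ^ card Bad" using finBad by (simp add: card_PiE m_def)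
    also have "card Bad = cnt (snd j)" unfolding Bad_def cnt_def lj ..
    finally have "card T \<le> m ^ cnt (snd j)" .
    moreover have "card (Wn F P n ` (s n -` {j})) \<le> card T" using sub2 finT by (rule card_mono[rotated])
    ultimately show ?thesis using False by simp
  qed
qed

lemma ln_card_fiber:
  assumes j: "j \<in> range (s n)"
  shows "ln (real (card (Wn F P n ` (s n -` {j})))) \<le> (real (cnt (snd j)) + (if bad j then real n else 0)) * ln (real m)"
proof -
  have "Wn F P n ` (s n -` {j}) \<subseteq> range (Wn F P n)" by auto
  moreover have "finite (range (Wn F P n))" using fv_Wn[OF P, of n] unfolding fv_def by simp
  ultimately have fin: "finite (Wn F P n ` (s n -` {j}))" by (rule finite_subset)
  have ne: "Wn F P n ` (s n -` {j}) \<noteq> {}" using j by auto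
  have c1: "real (card (Wn F P n ` (s n -` {j}))) > 0" using fin ne by (simp add: card_gt_0_iff)
  have mp: "real m > 0" using m_pos by simp
  have "ln (real (card (Wn F P n ` (s n -` {j})))) \<le> ln (real (m ^ (cnt (snd j) + (if bad j then n else 0))))"
    using card_fiber[OF j] c1 mp by (subst ln_le_cancel_iff) auto
  also have "\<dots> = real (cnt (snd j) + (if bad j then n else 0)) * ln (real m)"
    using mp by (simp add: ln_realpow)
  finally show ?thesis by (cases "bad j") auto
qed

lemma sum_cnt: "(\<Sum>j\<in>range (s n). pr \<mu> (s n) j * real (cnt (snd j))) \<le> real n * \<delta>"
proof -
  have "(\<Sum>j\<in>range (s n). pr \<mu> (s n) j * real (cnt (snd j))) =
        (\<Sum>j\<in>range (s n). \<Sum>i<n. pr \<mu> (s n) j * (if (\<lambda>j. snd j ! i) j then 1 else 0))"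
  proof (intro sum.cong refl)
    fix j assume "j \<in> range (s n)"
    then have lj: "length (snd j) = n" unfolding s_def Bn_def by auto
    have "real (cnt (snd j)) = (\<Sum>i<n. if snd j ! i then 1 else 0)"
      unfolding cnt_def lj by (rule card_count)
    then show "pr \<mu> (s n) j * real (cnt (snd j)) = (\<Sum>i<n. pr \<mu> (s n) j * (if (\<lambda>j. snd j ! i) j then 1 else 0))"
      by (simp add: sum_distrib_left)
  qed
  also have "\<dots> = (\<Sum>i<n. \<Sum>j\<in>range (s n). pr \<mu> (s n) j * (if (\<lambda>j. snd j ! i) j then 1 else 0))"
    by (rule sum.swap)
  also have "\<dots> \<le> (\<Sum>i<n. \<delta>)"
  proof (rule sum_mono)
    fix i assume "i \<in> {..<n}"
    then have i: "i < n" by simp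
    have e: "(\<lambda>z. snd (s n z) ! i) = b i" using i by (auto simp: s_def Bn_def)
    have "(\<Sum>j\<in>range (s n). pr \<mu> (s n) j * (if (\<lambda>j. snd j ! i) j then 1 else 0)) =
          (\<Sum>u\<in>range (\<lambda>z. snd (s n z) ! i). pr \<mu> (\<lambda>z. snd (s n z) ! i) u * (if u then 1 else 0))"
      by (rule fiber_sum[OF fv_s])
    also have "\<dots> = pr \<mu> (b i) True" unfolding e by (rule bool_sum[OF fv_b])
    also have "\<dots> \<le> \<delta>"
    proof -
      have "b i -` {True} = (F^^i) -` D" unfolding b_def by auto
      then show ?thesis unfolding pr_def using Fpow_pres[OF Ds] Dm by simp
    qed
    finally show "(\<Sum>j\<in>range (s n). pr \<mu> (s n) j * (if (\<lambda>j. snd j ! i) j then 1 else 0)) \<le> \<delta>" .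
  qed
  also have "\<dots> = real n * \<delta>" by simp
  finally show ?thesis .
qed

lemma sum_bad: "(\<Sum>j\<in>range (s n). pr \<mu> (s n) j * (if bad j then 1 else 0)) \<le> \<delta>"
proof -
  have e: "(\<lambda>z. bad (s n z)) = (\<lambda>z. z \<notin> G)"
  proof
    fix z show "bad (s n z) = (z \<notin> G)"
    proof
      assume "bad (s n z)"
      then obtain z' where z': "U z' = U z" "z' \<notin> G" unfolding bad_def s_def by auto
      show "z \<notin> G"
      proof
        assume "z \<in> G"
        then have "z' \<in> G" using G_det[of z z'] z'(1) by simp
        then show False using z'(2) by simp
      qed
    next
      assume "z \<notin> G"
      then show "bad (s n z)" unfolding bad_def s_def by auto
    qed
  qed
  have "(\<Sum>j\<in>range (s n). pr \<mu> (s n) j * (if bad j then 1 else 0)) =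
        (\<Sum>u\<in>range (\<lambda>z. bad (s n z)). pr \<mu> (\<lambda>z. bad (s n z)) u * (if u then 1 else 0))"
    by (rule fiber_sum[OF fv_s])
  also have "\<dots> = pr \<mu> (\<lambda>z. bad (s n z)) True" by (rule bool_sum[OF fv_comp[OF fv_s]])
  also have "\<dots> = measure \<mu> (UNIV - G)" unfolding pr_def e by (simp add: vimage_def Compl_eq_Diff_UNIV[symmetric] Collect_neg_eq)
  also have "\<dots> \<le> \<delta>" using Gm unfolding G_def .
  finally show ?thesis .
qed

lemma main_bound:
  "Hs \<mu> (Wn F P n) \<le> ln (real (card (range U))) + real n * (3 * sqrt \<delta> + 2 * \<delta> * ln (real m))"
proof -
  have lm: "ln (real m) \<ge> 0" using m_pos by simp
  have "Hs \<mu> (Wn F P n) \<le> Hs \<mu> (s n) + (\<Sum>j\<in>range (s n). pr \<mu> (s n) j * ln (real (card (Wn F P n ` (s n -` {j})))))"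
    by (rule Hs_split[OF fv_Wn[OF P] fv_s])
  also have "(\<Sum>j\<in>range (s n). pr \<mu> (s n) j * ln (real (card (Wn F P n ` (s n -` {j}))))) \<le>
      (\<Sum>j\<in>range (s n). pr \<mu> (s n) j * ((real (cnt (snd j)) + (if bad j then real n else 0)) * ln (real m)))"
    by (intro sum_mono mult_left_mono ln_card_fiber pr_nonneg)
  also have "\<dots> = (\<Sum>j\<in>range (s n). ln (real m) * (pr \<mu> (s n) j * real (cnt (snd j))) +
        ln (real m) * real n * (pr \<mu> (s n) j * (if bad j then 1 else 0)))"
    by (intro sum.cong refl) (auto simp: algebra_simps)
  also have "\<dots> = ln (real m) * (\<Sum>j\<in>range (s n). pr \<mu> (s n) j * real (cnt (snd j))) +
        ln (real m) * real n * (\<Sum>j\<in>range (s n). pr \<mu> (s n) j * (if bad j then 1 else 0))"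
    by (simp only: sum.distrib sum_distrib_left)
  also have "\<dots> \<le> ln (real m) * (real n * \<delta>) + ln (real m) * real n * \<delta>"
  proof (rule add_mono)
    show "ln (real m) * (\<Sum>j\<in>range (s n). pr \<mu> (s n) j * real (cnt (snd j))) \<le> ln (real m) * (real n * \<delta>)"
      using sum_cnt lm by (rule mult_left_mono)
    show "ln (real m) * real n * (\<Sum>j\<in>range (s n). pr \<mu> (s n) j * (if bad j then 1 else 0)) \<le> ln (real m) * real n * \<delta>"
      using sum_bad lm by (intro mult_left_mono) auto
  qed
  also note Hs_s
  finally show ?thesis by (simp add: algebra_simps)
qed

end


context setting begin

lemma wall_shift_pre: "(shift ^^ t) -` wall F r x0 0 = wall F r x0 (int t)"
  using wall_shift[OF ca] by (auto simp: shift_pow)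

lemma wall_ishift_pre: "(ishift ^^ t) -` wall F r x0 0 = wall F r x0 (- int t)"
  using wall_shift[OF ca] by (auto simp: ishift_pow)

lemma step_A:
  assumes P: "finite_meas_partition \<mu> P" and eq: "mu_equicontinuous \<mu> F r" and eps: "\<epsilon> > 0"
  shows "\<exists>n0. \<forall>n\<ge>n0. Hs \<mu> (Wn F P n) \<le> \<epsilon> * real n"
proof -
  obtain x0 where x0: "emeasure \<mu> (Bball F r x0) > 0" using eq unfolding mu_equicontinuous_def by blast
  define W0 where "W0 = wall F r x0 0"
  have W0s: "W0 \<in> sets \<mu>" unfolding W0_def by (rule wall_sets)
  have "emeasure \<mu> (Bball F r x0) \<le> emeasure \<mu> W0"
    unfolding W0_def by (rule emeasure_mono[OF Bball_wall wall_sets])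
  then have "emeasure \<mu> W0 > 0" using x0 by simp
  then have W0p: "measure \<mu> W0 > 0" by (simp add: emeasure_eq_measure)
  have finP: "finite P" using P unfolding finite_meas_partition_def by simp
  have Ps: "P \<subseteq> sets \<mu>" using P unfolding finite_meas_partition_def by simp
  have Pne: "P \<noteq> {}" using P sp unfolding finite_meas_partition_def by auto
  define m where "m = card P"
  have m1: "real m \<ge> 1" unfolding m_def using finP Pne by (simp add: Suc_le_eq card_gt_0_iff)
  have lm: "ln (real m) \<ge> 0" using m1 by simp
  define \<delta> where "\<delta> = min 1 (min ((\<epsilon>/12)^2) (\<epsilon> / (8 * (ln (real m) + 1))))"
  have dpos: "\<delta> > 0" unfolding \<delta>_def using eps lm by simp
  have d1: "3 * sqrt \<delta> \<le> \<epsilon> / 4"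
  proof -
    have "\<delta> \<le> (\<epsilon>/12)^2" unfolding \<delta>_def by simp
    then have "sqrt \<delta> \<le> sqrt ((\<epsilon>/12)^2)" by (rule real_sqrt_le_mono)
    also have "\<dots> = \<epsilon> / 12" using eps by simp
    finally show ?thesis by simp
  qed
  have d2: "2 * \<delta> * ln (real m) \<le> \<epsilon> / 4"
  proof -
    have "\<delta> \<le> \<epsilon> / (8 * (ln (real m) + 1))" unfolding \<delta>_def by simp
    then have "2 * \<delta> * ln (real m) \<le> 2 * (\<epsilon> / (8 * (ln (real m) + 1))) * ln (real m)"
      using lm by (intro mult_right_mono) auto
    also have "\<dots> = (\<epsilon> / 4) * (ln (real m) / (ln (real m) + 1))" using lm by (simp add: field_simps)
    also have "\<dots> \<le> (\<epsilon> / 4) * 1" using lm eps by (intro mult_left_mono) auto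
    finally show ?thesis by simp
  qed
    have "\<forall>p\<in>P. \<exists>k C. C \<in> sets \<mu> \<and> cyl k C \<and> measure \<mu> (p - C) + measure \<mu> (C - p) < \<delta> / real m"
    using appr_all Ps dpos m1 unfolding appr_def by (meson divide_pos_pos less_le_trans subsetD zero_less_one)
  then obtain kf Cf where kC: "\<And>p. p \<in> P \<Longrightarrow> Cf p \<in> sets \<mu> \<and> cyl (kf p) (Cf p) \<and> measure \<mu> (p - Cf p) + measure \<mu> (Cf p - p) < \<delta> / real m"
    by metis
  define k where "k = Max (insert 0 (kf ` P))"
  have kfk: "kf p \<le> k" if "p \<in> P" for p unfolding k_def using finP that by (intro Max_ge) auto
  define D where "D = (\<Union>p\<in>P. (p - Cf p) \<union> (Cf p - p))"
  have Ds: "D \<in> sets \<mu>" unfolding D_def using kC Ps finP by (intro sets.finite_UN) auto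
  have Dm: "measure \<mu> D \<le> \<delta>"
  proof -
    have "measure \<mu> D \<le> (\<Sum>p\<in>P. measure \<mu> ((p - Cf p) \<union> (Cf p - p)))"
      unfolding D_def using kC Ps finP by (intro finite_measure_subadditive_finite) auto
    also have "\<dots> \<le> (\<Sum>p\<in>P. \<delta> / real m)"
    proof (rule sum_mono)
      fix p assume p: "p \<in> P"
      have "measure \<mu> ((p - Cf p) \<union> (Cf p - p)) \<le> measure \<mu> (p - Cf p) + measure \<mu> (Cf p - p)"
        using kC[OF p] Ps p by (intro measure_Un_le) auto
      then show "measure \<mu> ((p - Cf p) \<union> (Cf p - p)) \<le> \<delta> / real m" using kC[OF p] by simp
    qed
    also have "\<dots> = \<delta>" using m1 unfolding m_def by simp
    finally show ?thesis .
  qed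
  obtain p0 where p0: "p0 \<in> P" using Pne by auto
  define \<psi> where "\<psi> z = (if \<exists>p\<in>P. z \<in> Cf p then SOME p. p \<in> P \<and> z \<in> Cf p else p0)" for z
  have psi_cyl: "\<psi> x = \<psi> y" if ag: "\<And>j. \<bar>j\<bar> \<le> k \<Longrightarrow> x j = y j" for x y
  proof -
    have "x \<in> Cf p \<longleftrightarrow> y \<in> Cf p" if p: "p \<in> P" for p
    proof -
      have "cyl k (Cf p)" using kC[OF p] kfk[OF p] cyl_mono by blast
      then show ?thesis unfolding cyl_def using ag by blast
    qed
    then have e: "(\<lambda>p. p \<in> P \<and> x \<in> Cf p) = (\<lambda>p. p \<in> P \<and> y \<in> Cf p)" by auto
    have e2: "(\<exists>p\<in>P. x \<in> Cf p) = (\<exists>p\<in>P. y \<in> Cf p)" using e by metis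
    have e3: "(SOME p. p \<in> P \<and> x \<in> Cf p) = (SOME p. p \<in> P \<and> y \<in> Cf p)" using e by (rule arg_cong)
    show ?thesis unfolding \<psi>_def by (simp only: e2 e3)
  qed
  have psiD: "nu P z = \<psi> z" if z: "z \<notin> D" for z
  proof -
    define p where "p = nu P z"
    have p: "p \<in> P" "z \<in> p" unfolding p_def using nu_prop[OF P sp] by auto
    have zC: "z \<in> Cf p" using z p unfolding D_def by auto
    then have ex: "\<exists>q. q \<in> P \<and> z \<in> Cf q" using p by auto
    define q where "q = (SOME q. q \<in> P \<and> z \<in> Cf q)"
    have q: "q \<in> P" "z \<in> Cf q" unfolding q_def using someI_ex[OF ex] by auto
    have "q = p"
    proof (rule ccontr)
      assume "q \<noteq> p"
      then have "z \<notin> q" using nu_eq[OF P sp q(1)] p_def by auto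
      then have "z \<in> D" using q unfolding D_def by auto
      then show False using z by simp
    qed
    moreover have "\<psi> z = q" unfolding \<psi>_def q_def using ex by auto
    ultimately show ?thesis unfolding p_def by simp
  qed
  define K where "K = nat k"
  have kK: "k \<le> int K" unfolding K_def by simp
    have fullR: "measure \<mu> (\<Union>t\<in>{K..}. (shift^^t) -` W0) = 1"
    by (rule recur[OF shift_meas shift_pres shift_erg W0s W0p])
  obtain N1 where N1: "measure \<mu> (\<Union>t\<in>{K..N1}. (shift^^t) -` W0) > 1 - \<delta>/2"
    using recur_trunc[OF shift_meas fullR W0s, of "\<delta>/2"] dpos by auto
  have fullL: "measure \<mu> (\<Union>t\<in>{K..}. (ishift^^t) -` W0) = 1"
    by (rule recur[OF ishift_meas ishift_pres ishift_erg W0s W0p])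
  obtain N2 where N2: "measure \<mu> (\<Union>t\<in>{K..N2}. (ishift^^t) -` W0) > 1 - \<delta>/2"
    using recur_trunc[OF ishift_meas fullL W0s, of "\<delta>/2"] dpos by auto
  define GR where "GR = (\<Union>t\<in>{K..N1}. wall F r x0 (int t))"
  define GL where "GL = (\<Union>t\<in>{K..N2}. wall F r x0 (- int t))"
  have GRe: "GR = (\<Union>t\<in>{K..N1}. (shift^^t) -` W0)" unfolding GR_def W0_def wall_shift_pre ..
  have GLe: "GL = (\<Union>t\<in>{K..N2}. (ishift^^t) -` W0)" unfolding GL_def W0_def wall_ishift_pre ..
  have GRs: "GR \<in> sets \<mu>" unfolding GR_def using wall_sets by auto
  have GLs: "GL \<in> sets \<mu>" unfolding GL_def using wall_sets by auto
  have Gm: "measure \<mu> (UNIV - (GR \<inter> GL)) \<le> \<delta>"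
  proof -
    have "UNIV - (GR \<inter> GL) = (UNIV - GR) \<union> (UNIV - GL)" by auto
    moreover have "measure \<mu> ((UNIV - GR) \<union> (UNIV - GL)) \<le> measure \<mu> (UNIV - GR) + measure \<mu> (UNIV - GL)"
    proof (rule measure_Un_le)
      show "UNIV - GR \<in> sets \<mu>" using sets.compl_sets[OF GRs] sp by simp
      show "UNIV - GL \<in> sets \<mu>" using sets.compl_sets[OF GLs] sp by simp
    qed
    moreover have "measure \<mu> (UNIV - GR) = 1 - measure \<mu> GR" using prob_compl[OF GRs] sp by simp
    moreover have "measure \<mu> (UNIV - GL) = 1 - measure \<mu> GL" using prob_compl[OF GLs] sp by simp
    ultimately show ?thesis using N1 N2 GRe GLe by simp
  qed
  have "est F r \<mu> P x0 \<delta> D \<psi> k K N1 N2"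
    unfolding est_def est_axioms_def
    using setting_axioms P Ds Dm psi_cyl psiD kK Gm unfolding GR_def GL_def by blast
  then interpret E: est F r \<mu> P x0 \<delta> D \<psi> k K N1 N2 .
  define C where "C = real (card (range E.U))"
  have C1: "C \<ge> 1"
  proof -
    have "finite (range E.U)" using E.fv_U unfolding fv_def by simp
    then show ?thesis unfolding C_def by (simp add: Suc_le_eq card_gt_0_iff)
  qed
  have bound: "Hs \<mu> (Wn F P n) \<le> ln C + real n * (\<epsilon> / 2)" for n
  proof -
    have "Hs \<mu> (Wn F P n) \<le> ln C + real n * (3 * sqrt \<delta> + 2 * \<delta> * ln (real m))"
      using E.main_bound[of n] unfolding C_def E.m_def m_def .
    also have "real n * (3 * sqrt \<delta> + 2 * \<delta> * ln (real m)) \<le> real n * (\<epsilon> / 2)"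
      using d1 d2 by (intro mult_left_mono) auto
    finally show ?thesis by simp
  qed
  define n0 where "n0 = nat \<lceil>2 * ln C / \<epsilon>\<rceil>"
  have "Hs \<mu> (Wn F P n) \<le> \<epsilon> * real n" if n: "n \<ge> n0" for n
  proof -
    have "2 * ln C / \<epsilon> \<le> real n0" unfolding n0_def by linarith
    also have "\<dots> \<le> real n" using n by simp
    finally have "2 * ln C \<le> real n * \<epsilon>" using eps by (simp add: field_simps)
    then show ?thesis using bound[of n] by (simp add: algebra_simps)
  qed
  then show ?thesis by blast
qed

lemma rate_zero:
  assumes P: "finite_meas_partition \<mu> P" and eq: "mu_equicontinuous \<mu> F r"
  shows "partition_entropy_rate \<mu> F P = 0"
proof -
  define X where "X n = partition_entropy \<mu> (iter_join \<mu> F P (Suc n)) / real (Suc n)" for n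
  have X: "X n = Hs \<mu> (Wn F P (Suc n)) / real (Suc n)" for n unfolding X_def PE_eq[OF P] ..
  have "X \<longlonglongrightarrow> 0"
  proof (rule LIMSEQ_I)
    fix e :: real assume e: "e > 0"
    obtain n0 where n0: "\<And>n. n \<ge> n0 \<Longrightarrow> Hs \<mu> (Wn F P n) \<le> (e/2) * real n"
      using step_A[OF P eq, of "e/2"] e by auto
    have "norm (X n - 0) < e" if "n \<ge> n0" for n
    proof -
      have "Hs \<mu> (Wn F P (Suc n)) \<le> (e/2) * real (Suc n)" using n0[OF le_SucI[OF that]] .
      then have "X n \<le> e/2" unfolding X by (simp add: divide_le_eq)
      moreover have "X n \<ge> 0" unfolding X using Hs_nonneg[of "Wn F P (Suc n)"] by simp
      ultimately show ?thesis using e by simp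
    qed
    then show "\<exists>no. \<forall>n\<ge>no. norm (X n - 0) < e" by blast
  qed
  then have "lim X = 0" by (rule limI)
  then show ?thesis unfolding partition_entropy_rate_def X_def .
qed

lemma ks_zero:
  assumes eq: "mu_equicontinuous \<mu> F r"
  shows "ks_entropy \<mu> F = 0"
proof -
  have "finite_meas_partition \<mu> {UNIV}"
    unfolding finite_meas_partition_def using sets.top[of \<mu>] sp by auto
  then have ne: "{P. finite_meas_partition \<mu> P} \<noteq> {}" by auto
  have "ks_entropy \<mu> F = (SUP P \<in> {P. finite_meas_partition \<mu> P}. ereal 0)"
    unfolding ks_entropy_def using rate_zero[OF _ eq] by (intro SUP_cong) auto
  also have "\<dots> = 0" using ne by (simp add: zero_ereal_def)
  finally show ?thesis .
qed

end

theorem corollary1: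
  fixes F :: "(int \<Rightarrow> 'a::finite) \<Rightarrow> (int \<Rightarrow> 'a)"
    and r :: nat
    and \<mu> :: "(int \<Rightarrow> 'a) measure"
  assumes "cellular_automaton F r"
    and "prob_space \<mu>"
    and "sets \<mu> = sets full_shift_space"
    and "ergodic \<mu> shift"
    and "invariant_measure \<mu> F"
    and "mu_equicontinuous \<mu> F r"
  shows "ks_entropy \<mu> F = 0"
proof -
  interpret setting F r \<mu> using assms(1-5) by (simp add: setting_def)
  show ?thesis by (rule ks_zero[OF assms(6)])
qed


end
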